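(* Let $K$ be a twisted knotoid diagram, $s$ a state of $K$, and $G^s_K$ the associated marked ribbon graph decorated with signs, arrows and bars. Let $e_\pm$ be the numbers of positive/negative edges and $b_e=B/A$ for positive, $b_e=A/B$ for negative edges. Then \[\langle K\rangle^t=\frac{A^{e_+}B^{e_-}}{d}\,R^t_{G^s_K}(1,\mathbf b,d),\qquad \langle K\rangle^t_A=\frac{A^{e_+-e_-}}{-A^2-A^{-2}}\,R^t_{G^s_K}\big(1,\mathbf b|_{B=A^{-1}},-A^2-A^{-2}\big).\]
   Context: Write $I=[0,1]$. A twisted knotoid diagram is an immersion of $I$ into $S^2$ whose singularities are finitely many transversal double points, each decorated either as a classical crossing (with over/under information) or as a virtual crossing, and whose arcs may carry finitely many bars (short segments transverse to the curve); tail = image of $0$, head = image of $1$, oriented tail to head. Oriented state expansion: at each classical crossing there are two smoothings, the Kauffman $A$-smoothing and $B$-smoothing. Exactly one is compatible with the orientation (oriented smoothing); the other (disoriented) reverses the orientation along its arcs, and at each of the two points of reversal an arrow is placed, oriented counterclockwise around the former crossing. A state $s$ is a choice of smoothing at every classical crossing; it consists of loop components and one arc component, decorated with arrows and bars. Twisted reduction rules: planar isotopy; virtual moves (arrows and bars pass virtual crossings); two consecutive arrows on a component pointing in the same direction cancel; two adjacent bars cancel; a bar adjacent to an endpoint may be created or removed; a bar may be moved past an adjacent arrow, reversing that arrow. Every loop component reduces to $K_i$ ($i\ge 0$; a loop with $2i$ alternating arrows) or $K_{1/2}$ (a loop with one bar, no arrows), and the arc reduces to $\Lambda_i$ (an arc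 with $2i$ alternating arrows). The twisted arrow bracket is $\langle K\rangle^t=\sum_s A^{a(s)}B^{b(s)}\prod_{\text{loops }C} d\,X_C\cdot\Lambda_{j(s)}$, where $a(s),b(s)$ are the numbers of $A$-/$B$-smoothings, $X_C\in\{K_i\}\cup\{K_{1/2}\}$ is the reduced form of $C$, $K_0=\Lambda_0=1$, with commuting variables; $\langle K\rangle^t_A$ is its specialization at $B=A^{-1}$, $d=-A^2-A^{-2}$. A ribbon graph is a surface that is a union of vertex discs and edge discs, each edge disc meeting vertex discs in exactly two disjoint segments (attaching arcs); a marked vertex carries a marking (a boundary point away from attaching arcs) and an orientation of its boundary. Bars are allowed on vertex boundaries away from attaching arcs. The marked ribbon graph $G^s_K$: vertices are discs bounded by the state components of $s$, the arc component giving the marked vertex whose boundary is the arc closed up through the marking joining its endpoints, oriented tail to head. Edges correspond to classical crossings: at each smoothing site a small planar ribbon joins the two opposite arcs of the smoothing. Sign $+$ if $s$ uses the $A$-smoothing there, $-$ otherwise. Each edge gets two arrows running counterclockwise: if the smoothing is oriented, one on each edge boundary arc not meeting a vertex; if disoriented, one on each attaching arc. Bars of $K$ are kept in place. For a spanning subgraph $F\subseteq E(G)$, $k(F)$ is its number of components and $\mathrm{bc}(F)$ its number of boundary components; one boundary component passes through the marking, the others form $\partial^c(F)$. Each boundary component is reduced by the twisted reduction rules above: a circular one contributes its reduced form $X_f\in\{K_j\}\cup\{K_{1/2}\}$, the marked one contributes $\Lambda_{j(F)}$. The twisted Bollobás–Riordan polynomial is \[R^t_G(a,\mathbf b,c)=\sum_{F\subseteq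 E(G)}a^{k(F)}\Big(\prod_{e\in F}b_e\Big)c^{\mathrm{bc}(F)}\Big(\prod_{f\in\partial^c(F)}X_f\Big)\Lambda_{j(F)}.\] *)

theory Defs
  imports Main
begin

text \<open>A decoration on a curve piece: an arrow (True = pointing in the direction of
  the piece, False = against it) or a bar.\<close>
datatype deco = Arr bool | Bar

fun flipd :: "deco \<Rightarrow> deco" where
  "flipd (Arr b) = Arr (\<not> b)"
| "flipd Bar = Bar"

definition rev_word :: "deco list \<Rightarrow> deco list" where
  "rev_word w = rev (map flipd w)"

text \<open>Twisted reduction moves on the decoration word of an arc component (read from
  tail to head).\<close>
inductive lin_step :: "deco list \<Rightarrow> deco list \<Rightarrow> bool" where
  arr_cancel: "lin_step (x @ [Arr b, Arr b] @ y) (x @ y)"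
| bar_cancel: "lin_step (x @ [Bar, Bar] @ y) (x @ y)"
| bar_tail: "lin_step (Bar # y) y"
| bar_head: "lin_step (x @ [Bar]) x"
| bar_past: "lin_step (x @ [Bar, Arr b] @ y) (x @ [Arr (\<not> b), Bar] @ y)"

text \<open>Twisted reduction moves on the (cyclic, unoriented) decoration word of a loop
  component: rotation and reversal of the reading (the word is cyclic and the loop
  unoriented), and the local moves.\<close>
inductive cyc_step :: "deco list \<Rightarrow> deco list \<Rightarrow> bool" where
  rotate: "cyc_step (x @ y) (y @ x)"
| reverse: "cyc_step w (rev_word w)"
| arr_cancel: "cyc_step (x @ [Arr b, Arr b] @ y) (x @ y)"
| bar_cancel: "cyc_step (x @ [Bar, Bar] @ y) (x @ y)"
| bar_past: "cyc_step (x @ [Bar, Arr b] @ y) (x @ [Arr (\<not> b), Bar] @ y)"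

definition lin_equiv :: "deco list \<Rightarrow> deco list \<Rightarrow> bool" where
  "lin_equiv = (\<lambda>u v. lin_step u v \<or> lin_step v u)\<^sup>*\<^sup>*"

definition cyc_equiv :: "deco list \<Rightarrow> deco list \<Rightarrow> bool" where
  "cyc_equiv = (\<lambda>u v. cyc_step u v \<or> cyc_step v u)\<^sup>*\<^sup>*"

text \<open>Reduced forms: K_i (loop with 2i alternating arrows), K_{1/2} (loop with one bar),
  Lambda_j (arc with 2j alternating arrows).\<close>
datatype loopnf = KL nat | KHalf

fun nf_word :: "loopnf \<Rightarrow> deco list" where
  "nf_word (KL i) = concat (replicate i [Arr True, Arr False])"
| "nf_word KHalf = [Bar]"

definition lam_word :: "nat \<Rightarrow> deco list" where
  "lam_word j = concat (replicate j [Arr True, Arr False])"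

fun loop_val :: "(nat \<Rightarrow> 'a) \<Rightarrow> 'a \<Rightarrow> loopnf \<Rightarrow> 'a" where
  "loop_val K Kh (KL i) = K i"
| "loop_val K Kh KHalf = Kh"

text \<open>A piece is a curve segment from a point to a point carrying a word of decorations
  (read in the direction of the piece).\<close>
type_synonym 'p piece = "'p \<times> 'p \<times> deco list"

fun psrc :: "'p piece list \<Rightarrow> nat \<times> bool \<Rightarrow> 'p" where
  "psrc P (i, d) = (if d then fst (P ! i) else fst (snd (P ! i)))"

fun ptgt :: "'p piece list \<Rightarrow> nat \<times> bool \<Rightarrow> 'p" where
  "ptgt P (i, d) = (if d then fst (snd (P ! i)) else fst (P ! i))"

fun owrd :: "'p piece list \<Rightarrow> nat \<times> bool \<Rightarrow> deco list" where
  "owrd P (i, d) = (if d then snd (snd (P ! i)) else rev_word (snd (snd (P ! i))))"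

definition tword :: "'p piece list \<Rightarrow> (nat \<times> bool) list \<Rightarrow> deco list" where
  "tword P xs = concat (map (owrd P) xs)"

definition trail :: "'p piece list \<Rightarrow> (nat \<times> bool) list \<Rightarrow> bool" where
  "trail P xs \<longleftrightarrow> (\<forall>k. Suc k < length xs \<longrightarrow> ptgt P (xs ! k) = psrc P (xs ! Suc k))"

definition closed_trail :: "'p piece list \<Rightarrow> (nat \<times> bool) list \<Rightarrow> bool" where
  "closed_trail P xs \<longleftrightarrow> xs \<noteq> [] \<and> trail P xs \<and> ptgt P (last xs) = psrc P (hd xs)"

definition covers :: "(nat \<times> bool) list \<Rightarrow> nat set \<Rightarrow> bool" where
  "covers xs C \<longleftrightarrow> distinct (map fst xs) \<and> set (map fst xs) = C"

definition share :: "'p piece list \<Rightarrow> nat \<Rightarrow> nat \<Rightarrow> bool" where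
  "share P i j \<longleftrightarrow> {fst (P ! i), fst (snd (P ! i))} \<inter> {fst (P ! j), fst (snd (P ! j))} \<noteq> {}"

definition comps :: "'p piece list \<Rightarrow> nat set \<Rightarrow> nat set set" where
  "comps P I = I // ({(i, j). i \<in> I \<and> j \<in> I \<and> share P i j}\<^sup>*)"

definition loop_form :: "'p piece list \<Rightarrow> nat set \<Rightarrow> loopnf" where
  "loop_form P C = (THE r. \<exists>xs. closed_trail P xs \<and> covers xs C \<and>
                               cyc_equiv (tword P xs) (nf_word r))"

text \<open>The ends of the four half-strands at a classical crossing.\<close>
datatype xend = InO | OutO | InU | OutU
datatype pt = Tl | Hd | Cr nat xend

text \<open>A twisted knotoid diagram up to virtual moves: ncr classical crossings 0..ncr-1;
  gseq lists the 2 ncr passages through classical crossings met from tail to head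
  (crossing, True = over); csign c = True iff crossing c is positive; nbars j is the
  number of bars on the j-th arc of the curve (j = 0 .. 2 ncr; arc 0 starts at the tail,
  arc 2 ncr ends at the head).\<close>
record tkd =
  ncr :: nat
  gseq :: "(nat \<times> bool) list"
  csign :: "nat \<Rightarrow> bool"
  nbars :: "nat \<Rightarrow> nat"

definition twisted_knotoid_diagram :: "tkd \<Rightarrow> bool" where
  "twisted_knotoid_diagram D \<longleftrightarrow>
     distinct (gseq D) \<and> set (gseq D) = {..<ncr D} \<times> (UNIV :: bool set)"

definition seg_start :: "tkd \<Rightarrow> nat \<Rightarrow> pt" where
  "seg_start D j = (if j = 0 then Tl else
      (case gseq D ! (j - 1) of (c, ov) \<Rightarrow> Cr c (if ov then OutO else OutU)))"

definition seg_end :: "tkd \<Rightarrow> nat \<Rightarrow> pt" where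
  "seg_end D j = (if j = 2 * ncr D then Hd else
      (case gseq D ! j of (c, ov) \<Rightarrow> Cr c (if ov then InO else InU)))"

definition seg_pieces :: "tkd \<Rightarrow> pt piece list" where
  "seg_pieces D = map (\<lambda>j. (seg_start D j, seg_end D j, replicate (nbars D j) Bar))
                      [0..<2 * ncr D + 1]"

text \<open>Counterclockwise cyclic order of the four ends at crossing c (starting at the
  incoming over end).\<close>
definition ccw_ends :: "tkd \<Rightarrow> nat \<Rightarrow> xend list" where
  "ccw_ends D c = (if csign D c then [InO, InU, OutO, OutU] else [InO, OutU, OutO, InU])"

text \<open>Smoothing arcs at crossing c (a = True: Kauffman A-smoothing, joining the ends so
  that the two A-regions, swept by rotating the over strand counterclockwise, merge).
  Each arc joins two ccw-consecutive ends and is listed in ccw direction.\<close>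
definition smooth_arcs :: "tkd \<Rightarrow> nat \<Rightarrow> bool \<Rightarrow> (xend \<times> xend) list" where
  "smooth_arcs D c a = (let h = ccw_ends D c in
      if a then [(h ! 1, h ! 2), (h ! 3, h ! 0)] else [(h ! 0, h ! 1), (h ! 2, h ! 3)])"

definition is_in :: "xend \<Rightarrow> bool" where
  "is_in h \<longleftrightarrow> h = InO \<or> h = InU"

definition oriented_smoothing :: "tkd \<Rightarrow> nat \<Rightarrow> bool \<Rightarrow> bool" where
  "oriented_smoothing D c a \<longleftrightarrow> (\<forall>(p, q) \<in> set (smooth_arcs D c a). is_in p \<noteq> is_in q)"

text \<open>The pieces of the state S (S = set of A-smoothed crossings): the arcs of the
  diagram plus the smoothing arcs; a disoriented smoothing arc carries one arrow
  pointing counterclockwise around the former crossing.\<close>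
definition state_pieces :: "tkd \<Rightarrow> nat set \<Rightarrow> pt piece list" where
  "state_pieces D S = seg_pieces D @
     concat (map (\<lambda>c. map (\<lambda>(p, q). (Cr c p, Cr c q,
                     if oriented_smoothing D c (c \<in> S) then [] else [Arr True]))
                   (smooth_arcs D c (c \<in> S))) [0..<ncr D])"

definition state_comps :: "tkd \<Rightarrow> nat set \<Rightarrow> nat set set" where
  "state_comps D S = comps (state_pieces D S) {..<length (state_pieces D S)}"

text \<open>Piece 0 is the arc leaving the tail; the arc component is the one containing it.\<close>
definition state_loops :: "tkd \<Rightarrow> nat set \<Rightarrow> nat set set" where
  "state_loops D S = {C \<in> state_comps D S. 0 \<notin> C}"

definition state_arc :: "tkd \<Rightarrow> nat set \<Rightarrow> nat set" where
  "state_arc D S = (THE C. C \<in> state_comps D S \<and> 0 \<in> C)"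

definition arc_index :: "pt piece list \<Rightarrow> nat set \<Rightarrow> nat" where
  "arc_index P C = (THE j. \<exists>xs. xs \<noteq> [] \<and> trail P xs \<and> covers xs C \<and>
        psrc P (hd xs) = Tl \<and> ptgt P (last xs) = Hd \<and> lin_equiv (tword P xs) (lam_word j))"

text \<open>Twisted arrow bracket, evaluated in a field: K i, Kh, L j are the values of
  K_i, K_{1/2}, Lambda_j.\<close>
definition tbracket :: "tkd \<Rightarrow> 'a::field \<Rightarrow> 'a \<Rightarrow> 'a \<Rightarrow> (nat \<Rightarrow> 'a) \<Rightarrow> 'a \<Rightarrow> (nat \<Rightarrow> 'a) \<Rightarrow> 'a" where
  "tbracket D A B d K Kh L =
     (\<Sum>S\<in>Pow {..<ncr D}.
        A ^ card S * B ^ (ncr D - card S) *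
        (\<Prod>C\<in>state_loops D S. d * loop_val K Kh (loop_form (state_pieces D S) C)) *
        L (arc_index (state_pieces D S) (state_arc D S)))"

definition tbracketA :: "tkd \<Rightarrow> 'a::field \<Rightarrow> (nat \<Rightarrow> 'a) \<Rightarrow> 'a \<Rightarrow> (nat \<Rightarrow> 'a) \<Rightarrow> 'a" where
  "tbracketA D A K Kh L = tbracket D A (inverse A) (- (A ^ 2) - inverse (A ^ 2)) K Kh L"

text \<open>Combinatorial model: the boundary of the ribbon graph is cut into pieces between
  corner points (endpoints of attaching arcs).  Kinds: PV = piece of a vertex boundary
  between attaching arcs; PM = the (decoration-free) piece of the marked vertex boundary
  carrying the marking, directed along the boundary orientation; PA e = attaching arc of
  edge e; PS e = edge-boundary arc of e not meeting a vertex.\<close>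
datatype 'e pkind = PV | PM | PA 'e | PS 'e

record ('e, 'p) mrg =
  rg_edges :: "'e set"
  rg_sign :: "'e \<Rightarrow> bool"
  rg_pieces :: "('e pkind \<times> 'p piece) list"

definition rg_P :: "('e, 'p) mrg \<Rightarrow> 'p piece list" where
  "rg_P G = map snd (rg_pieces G)"

text \<open>Boundary of the spanning ribbon subgraph with edge set F.\<close>
definition bdry_idx :: "('e, 'p) mrg \<Rightarrow> 'e set \<Rightarrow> nat set" where
  "bdry_idx G F = {i. i < length (rg_pieces G) \<and>
     (case fst (rg_pieces G ! i) of PV \<Rightarrow> True | PM \<Rightarrow> True | PA e \<Rightarrow> e \<notin> F | PS e \<Rightarrow> e \<in> F)}"

text \<open>Pieces whose endpoints lie in the same component of the surface (V union F).\<close>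
definition surf_idx :: "('e, 'p) mrg \<Rightarrow> 'e set \<Rightarrow> nat set" where
  "surf_idx G F = {i. i < length (rg_pieces G) \<and>
     (case fst (rg_pieces G ! i) of PV \<Rightarrow> True | PM \<Rightarrow> True | PA e \<Rightarrow> True | PS e \<Rightarrow> e \<in> F)}"

definition rg_points :: "('e, 'p) mrg \<Rightarrow> 'p set" where
  "rg_points G = {p. \<exists>i < length (rg_P G). p = fst (rg_P G ! i) \<or> p = fst (snd (rg_P G ! i))}"

definition rg_k :: "('e, 'p) mrg \<Rightarrow> 'e set \<Rightarrow> nat" where
  "rg_k G F = card (rg_points G //
     (let R = {(fst (rg_P G ! i), fst (snd (rg_P G ! i))) | i. i \<in> surf_idx G F}
      in (R \<union> R\<inverse>)\<^sup>*))"

definition bdry_comps :: "('e, 'p) mrg \<Rightarrow> 'e set \<Rightarrow> nat set set" where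
  "bdry_comps G F = comps (rg_P G) (bdry_idx G F)"

definition mark_idx :: "('e, 'p) mrg \<Rightarrow> nat" where
  "mark_idx G = (THE i. i < length (rg_pieces G) \<and> fst (rg_pieces G ! i) = PM)"

definition circ_comps :: "('e, 'p) mrg \<Rightarrow> 'e set \<Rightarrow> nat set set" where
  "circ_comps G F = {C \<in> bdry_comps G F. mark_idx G \<notin> C}"

text \<open>The marked boundary component, cut open at the marking and read along the
  orientation of the marked vertex.\<close>
definition marked_index :: "('e, 'p) mrg \<Rightarrow> 'e set \<Rightarrow> nat" where
  "marked_index G F = (THE j. \<exists>C xs. C \<in> bdry_comps G F \<and> mark_idx G \<in> C \<and>
      closed_trail (rg_P G) xs \<and> covers xs C \<and> hd xs = (mark_idx G, True) \<and>
      lin_equiv (tword (rg_P G) (tl xs)) (lam_word j))"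

definition Rt :: "('e, 'p) mrg \<Rightarrow> 'a::field \<Rightarrow> ('e \<Rightarrow> 'a) \<Rightarrow> 'a \<Rightarrow>
                  (nat \<Rightarrow> 'a) \<Rightarrow> 'a \<Rightarrow> (nat \<Rightarrow> 'a) \<Rightarrow> 'a" where
  "Rt G a b c K Kh L =
     (\<Sum>F\<in>Pow (rg_edges G).
        a ^ rg_k G F * (\<Prod>e\<in>F. b e) * c ^ card (bdry_comps G F) *
        (\<Prod>f\<in>circ_comps G F. loop_val K Kh (loop_form (rg_P G) f)) *
        L (marked_index G F))"

definition epos :: "('e, 'p) mrg \<Rightarrow> nat" where
  "epos G = card {e \<in> rg_edges G. rg_sign G e}"

definition eneg :: "('e, 'p) mrg \<Rightarrow> nat" where
  "eneg G = card {e \<in> rg_edges G. \<not> rg_sign G e}"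

definition bvec :: "('e, 'p) mrg \<Rightarrow> 'a::field \<Rightarrow> 'a \<Rightarrow> 'e \<Rightarrow> 'a" where
  "bvec G A B e = (if rg_sign G e then B / A else A / B)"

text \<open>The marked ribbon graph of the state S of D: vertices bounded by the state
  components (the arc closed up through the marking piece Hd -> Tl), one edge per
  crossing, attaching arcs = arcs of the chosen smoothing, free edge-boundary arcs = arcs
  of the other smoothing; arrows (ccw around the crossing) on the free arcs if the chosen
  smoothing is oriented, on the attaching arcs otherwise; bars kept in place.\<close>
definition GsK :: "tkd \<Rightarrow> nat set \<Rightarrow> (nat, pt) mrg" where
  "GsK D S = \<lparr> rg_edges = {..<ncr D}, rg_sign = (\<lambda>c. c \<in> S),
     rg_pieces = [(PM, (Hd, Tl, []))] @ map (\<lambda>p. (PV, p)) (seg_pieces D) @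
       concat (map (\<lambda>c.
          map (\<lambda>(p, q). (PA c, (Cr c p, Cr c q,
                 if oriented_smoothing D c (c \<in> S) then [] else [Arr True])))
              (smooth_arcs D c (c \<in> S)) @
          map (\<lambda>(p, q). (PS c, (Cr c p, Cr c q,
                 if oriented_smoothing D c (c \<in> S) then [Arr True] else [])))
              (smooth_arcs D c (c \<notin> S))) [0..<ncr D]) \<rparr>"

end

theory Submission
  imports Defs
begin

definition shrel :: "'p piece list \<Rightarrow> nat set \<Rightarrow> (nat \<times> nat) set" where
  "shrel P I = {(i, j). i \<in> I \<and> j \<in> I \<and> share P i j}"

lemma comps_alt: "comps P I = (\<lambda>x. (shrel P I)\<^sup>* `` {x}) ` I"
  by (auto simp: comps_def quotient_def shrel_def)

lemma share_sym: "share P i j = share P j i"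
  by (auto simp: share_def)

lemma shrel_sym: "sym (shrel P I)"
  by (auto simp: sym_def shrel_def share_sym)

lemma rt_sym: "(x, y) \<in> (shrel P I)\<^sup>* \<Longrightarrow> (y, x) \<in> (shrel P I)\<^sup>*"
  by (meson shrel_sym sym_rtrancl symD)

lemma rt_in: "(x, y) \<in> (shrel P I)\<^sup>* \<Longrightarrow> y = x \<or> y \<in> I"
  by (induction rule: rtrancl_induct) (auto simp: shrel_def)

lemma cls_sub: "x \<in> I \<Longrightarrow> (shrel P I)\<^sup>* `` {x} \<subseteq> I"
  using rt_in by fastforce

lemma cls_eq: "(x, y) \<in> (shrel P I)\<^sup>* \<Longrightarrow> (shrel P I)\<^sup>* `` {x} = (shrel P I)\<^sup>* `` {y}"
  using rt_sym by (meson Image_singleton_iff rtrancl_trans subset_antisym subsetI)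

lemma finite_comps: "finite I \<Longrightarrow> finite (comps P I)"
  by (simp add: comps_alt)

section \<open>Transfer along an index embedding\<close>

locale emb =
  fixes P Q :: "'p piece list" and I :: "nat set" and \<sigma> :: "nat \<Rightarrow> nat"
  assumes inj: "inj_on \<sigma> I"
    and eq: "\<And>i. i \<in> I \<Longrightarrow> Q ! (\<sigma> i) = P ! i"
begin

definition f :: "nat \<times> bool \<Rightarrow> nat \<times> bool" where "f x = (\<sigma> (fst x), snd x)"
definition g :: "nat \<times> bool \<Rightarrow> nat \<times> bool" where "g x = (inv_into I \<sigma> (fst x), snd x)"

lemma share_tr: "i \<in> I \<Longrightarrow> j \<in> I \<Longrightarrow> share Q (\<sigma> i) (\<sigma> j) = share P i j"
  by (simp add: share_def eq)

lemma rt_tr1: "(x, y) \<in> (shrel P I)\<^sup>* \<Longrightarrow> (\<sigma> x, \<sigma> y) \<in> (shrel Q (\<sigma> ` I))\<^sup>*"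
proof (induction rule: rtrancl_induct)
  case base then show ?case by simp
next
  case (step y z)
  then have "(\<sigma> y, \<sigma> z) \<in> shrel Q (\<sigma> ` I)" by (auto simp: shrel_def share_tr)
  with step show ?case by (meson rtrancl.rtrancl_into_rtrancl)
qed

lemma rt_tr2: "(a, b) \<in> (shrel Q (\<sigma> ` I))\<^sup>* \<Longrightarrow> a = \<sigma> x \<Longrightarrow> x \<in> I \<Longrightarrow>
   \<exists>y. b = \<sigma> y \<and> (x, y) \<in> (shrel P I)\<^sup>*"
proof (induction rule: rtrancl_induct)
  case base then show ?case by auto
next
  case (step y z)
  then obtain y' where y': "y = \<sigma> y'" "(x, y') \<in> (shrel P I)\<^sup>*" by auto
  have y'I: "y' \<in> I" using rt_in[OF y'(2)] step.prems by auto
  from step(2) obtain z' where z': "z = \<sigma> z'" "z' \<in> I" "share Q (\<sigma> y') (\<sigma> z')"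
    using y' by (auto simp: shrel_def)
  then have z'': "z = \<sigma> z'" "z' \<in> I" "y' \<in> I" "share P y' z'" using y'I share_tr by auto
  then have "(y', z') \<in> shrel P I" using z'' by (simp add: shrel_def)
  with y' z'' have "(x, z') \<in> (shrel P I)\<^sup>*" by (meson rtrancl.rtrancl_into_rtrancl)
  with z'' show ?case by blast
qed

lemma cls_tr: "x \<in> I \<Longrightarrow> (shrel Q (\<sigma> ` I))\<^sup>* `` {\<sigma> x} = \<sigma> ` ((shrel P I)\<^sup>* `` {x})"
  using rt_tr1 rt_tr2 by fastforce

lemma comps_tr: "comps Q (\<sigma> ` I) = (\<lambda>C. \<sigma> ` C) ` comps P I"
  by (auto simp: comps_alt cls_tr image_image)

lemma psrc_tr: "fst x \<in> I \<Longrightarrow> psrc Q (f x) = psrc P x"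
  by (cases x) (simp add: f_def eq)
lemma ptgt_tr: "fst x \<in> I \<Longrightarrow> ptgt Q (f x) = ptgt P x"
  by (cases x) (simp add: f_def eq)
lemma owrd_tr: "fst x \<in> I \<Longrightarrow> owrd Q (f x) = owrd P x"
  by (cases x) (simp add: f_def eq)

lemma tword_tr: "set (map fst xs) \<subseteq> I \<Longrightarrow> tword Q (map f xs) = tword P xs"
  by (induction xs) (auto simp: tword_def owrd_tr)

lemma trail_tr: "set (map fst xs) \<subseteq> I \<Longrightarrow> trail Q (map f xs) = trail P xs"
proof -
  assume a: "set (map fst xs) \<subseteq> I"
  have k: "\<And>k. k < length xs \<Longrightarrow> fst (xs ! k) \<in> I" using a nth_mem by fastforce
  show ?thesis unfolding trail_def
    by (auto simp: psrc_tr ptgt_tr k Suc_lessD)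
qed

lemma closed_trail_tr: "set (map fst xs) \<subseteq> I \<Longrightarrow> closed_trail Q (map f xs) = closed_trail P xs"
proof (cases "xs = []")
  case False
  assume a: "set (map fst xs) \<subseteq> I"
  have "fst (last xs) \<in> I" "fst (hd xs) \<in> I" using a False by auto
  then show ?thesis unfolding closed_trail_def using False a
    by (simp add: trail_tr last_map hd_map psrc_tr ptgt_tr)
qed (simp add: closed_trail_def)

lemma covers_tr: "set (map fst xs) \<subseteq> I \<Longrightarrow> C \<subseteq> I \<Longrightarrow> covers (map f xs) (\<sigma> ` C) = covers xs C"
proof -
  assume a: "set (map fst xs) \<subseteq> I" "C \<subseteq> I"
  have m: "map fst (map f xs) = map \<sigma> (map fst xs)" by (simp add: f_def)
  have "inj_on \<sigma> (set (map fst xs))" using a inj inj_on_subset by blast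
  then have d: "distinct (map \<sigma> (map fst xs)) = distinct (map fst xs)"
    using distinct_map[of \<sigma> "map fst xs"] by blast
  have s: "(\<sigma> ` set (map fst xs) = \<sigma> ` C) = (set (map fst xs) = C)"
    using a inj by (simp add: inj_on_image_eq_iff)
  show ?thesis unfolding covers_def m using d s by (simp only: set_map)
qed

lemma fg: "set (map fst ys) \<subseteq> \<sigma> ` I \<Longrightarrow> map f (map g ys) = ys \<and> set (map fst (map g ys)) \<subseteq> I"
  by (induction ys) (auto simp: f_def g_def f_inv_into_f inv_into_into)

lemma loop_form_tr: "C \<subseteq> I \<Longrightarrow> loop_form Q (\<sigma> ` C) = loop_form P C"
proof -
  assume C: "C \<subseteq> I"
  have "\<And>r. (\<exists>ys. closed_trail Q ys \<and> covers ys (\<sigma> ` C) \<and> cyc_equiv (tword Q ys) (nf_word r))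
          = (\<exists>xs. closed_trail P xs \<and> covers xs C \<and> cyc_equiv (tword P xs) (nf_word r))"
  proof (intro iffI)
    fix r assume "\<exists>ys. closed_trail Q ys \<and> covers ys (\<sigma> ` C) \<and> cyc_equiv (tword Q ys) (nf_word r)"
    then obtain ys where ys: "closed_trail Q ys" "covers ys (\<sigma> ` C)" "cyc_equiv (tword Q ys) (nf_word r)" by blast
    then have s: "set (map fst ys) \<subseteq> \<sigma> ` I" using C by (auto simp: covers_def)
    from fg[OF s] obtain xs where xs: "ys = map f xs" "set (map fst xs) \<subseteq> I" by metis
    show "\<exists>xs. closed_trail P xs \<and> covers xs C \<and> cyc_equiv (tword P xs) (nf_word r)"
      using ys xs C by (auto simp: closed_trail_tr covers_tr tword_tr)
  next
    fix r assume "\<exists>xs. closed_trail P xs \<and> covers xs C \<and> cyc_equiv (tword P xs) (nf_word r)"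
    then obtain xs where xs: "closed_trail P xs" "covers xs C" "cyc_equiv (tword P xs) (nf_word r)" by blast
    then have s: "set (map fst xs) \<subseteq> I" using C by (auto simp: covers_def)
    show "\<exists>ys. closed_trail Q ys \<and> covers ys (\<sigma> ` C) \<and> cyc_equiv (tword Q ys) (nf_word r)"
      using xs s C by (intro exI[of _ "map f xs"]) (auto simp: closed_trail_tr covers_tr tword_tr)
  qed
  then show ?thesis unfolding loop_form_def by simp
qed

end

lemma shrel_mono: "J \<subseteq> J' \<Longrightarrow> (shrel P J)\<^sup>* \<subseteq> (shrel P J')\<^sup>*"
  by (rule rtrancl_mono) (auto simp: shrel_def)

lemma comps_insert:
  assumes m: "m \<notin> J" and C0: "C0 \<in> comps Q J" and j0: "j0 \<in> C0" "share Q m j0"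
    and only: "\<forall>j\<in>J. share Q m j \<longrightarrow> j \<in> C0"
  shows "comps Q (insert m J) = insert (insert m C0) (comps Q J - {C0})"
proof -
  let ?R = "shrel Q J" and ?R' = "shrel Q (insert m J)"
  obtain x0 where x0: "x0 \<in> J" "C0 = ?R\<^sup>* `` {x0}" using C0 by (auto simp: comps_alt)
  have C0J: "C0 \<subseteq> J" using cls_sub x0 by metis
  have j0J: "j0 \<in> J" using C0J j0 by auto
  have clos: "\<And>y z. y \<in> C0 \<Longrightarrow> (y, z) \<in> ?R\<^sup>* \<Longrightarrow> z \<in> C0"
    using x0 by (auto intro: rtrancl_trans)
  have a: "(x, y) \<in> ?R'\<^sup>* \<Longrightarrow> x \<in> J \<Longrightarrow> x \<notin> C0 \<Longrightarrow> (x, y) \<in> ?R\<^sup>* \<and> y \<notin> C0 \<and> y \<in> J" for x y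
  proof (induction rule: rtrancl_induct)
    case base then show ?case by simp
  next
    case (step y z)
    then have y: "(x, y) \<in> ?R\<^sup>*" "y \<notin> C0" "y \<in> J" by auto
    have zJ: "z \<in> J" "share Q y z" using step(2) y only share_sym by (auto simp: shrel_def)
    then have yz: "(y, z) \<in> ?R" using y by (auto simp: shrel_def)
    then have xz: "(x, z) \<in> ?R\<^sup>*" using y by (meson rtrancl.rtrancl_into_rtrancl)
    have "z \<notin> C0"
    proof
      assume "z \<in> C0"
      then have "x \<in> C0" using clos rt_sym xz by blast
      then show False using step.prems by simp
    qed
    then show ?case using xz zJ by simp
  qed
  have b: "(x, y) \<in> ?R'\<^sup>* \<Longrightarrow> x \<in> insert m C0 \<Longrightarrow> y \<in> insert m C0" for x y
  proof (induction rule: rtrancl_induct)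
    case base then show ?case by simp
  next
    case (step y z)
    show ?case
    proof (cases "y = m")
      case True then show ?thesis using step only by (auto simp: shrel_def)
    next
      case False
      then have "y \<in> C0" using step by simp
      moreover have "z = m \<or> (y, z) \<in> ?R" using step(2) C0J \<open>y \<in> C0\<close> by (auto simp: shrel_def)
      ultimately show ?thesis using clos by blast
    qed
  qed
  have mj0: "(m, j0) \<in> ?R'" using j0J j0 by (auto simp: shrel_def)
  have c: "x \<in> insert m C0 \<Longrightarrow> y \<in> insert m C0 \<Longrightarrow> (x, y) \<in> ?R'\<^sup>*" for x y
  proof -
    have my: "y \<in> insert m C0 \<Longrightarrow> (m, y) \<in> ?R'\<^sup>*" for y
    proof -
      assume "y \<in> insert m C0"
      moreover have "y \<in> C0 \<Longrightarrow> (j0, y) \<in> ?R\<^sup>*"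
        using x0 j0 rt_sym by (meson Image_singleton_iff rtrancl_trans)
      ultimately show ?thesis using mj0 shrel_mono[of J "insert m J" Q]
        by (metis converse_rtrancl_into_rtrancl insertE rtrancl.rtrancl_refl subset_insertI subsetD)
    qed
    assume "x \<in> insert m C0" "y \<in> insert m C0"
    then show ?thesis using my rt_sym by (meson rtrancl_trans)
  qed
  have cls1: "x \<in> insert m C0 \<Longrightarrow> ?R'\<^sup>* `` {x} = insert m C0" for x
    using b c by auto
  have cls2: "x \<in> J \<Longrightarrow> x \<notin> C0 \<Longrightarrow> ?R'\<^sup>* `` {x} = ?R\<^sup>* `` {x}" for x
    using a shrel_mono[of J "insert m J" Q] by auto
  have cls3: "x \<in> J \<Longrightarrow> (?R\<^sup>* `` {x} = C0) = (x \<in> C0)" for x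
    using x0 cls_eq rt_sym by (metis Image_singleton_iff rtrancl.rtrancl_refl)
  show ?thesis
  proof (intro set_eqI iffI)
    fix X assume "X \<in> comps Q (insert m J)"
    then obtain x where x: "x \<in> insert m J" "X = ?R'\<^sup>* `` {x}" by (auto simp: comps_alt)
    show "X \<in> insert (insert m C0) (comps Q J - {C0})"
    proof (cases "x \<in> insert m C0")
      case True then show ?thesis using cls1 x by simp
    next
      case False
      then have "x \<in> J" "x \<notin> C0" using x by auto
      then show ?thesis using cls2 cls3 x by (auto simp: comps_alt)
    qed
  next
    fix X assume "X \<in> insert (insert m C0) (comps Q J - {C0})"
    then consider "X = insert m C0" | x where "x \<in> J" "X = ?R\<^sup>* `` {x}" "X \<noteq> C0"
      by (auto simp: comps_alt)
    then show "X \<in> comps Q (insert m J)"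
    proof cases
      case 1 then have "X = ?R'\<^sup>* `` {m}" using cls1[of m] by simp
      then show ?thesis unfolding comps_alt by blast
    next
      case 2
      then have "x \<notin> C0" using cls3 by auto
      then have "X = ?R'\<^sup>* `` {x}" using 2 cls2 by simp
      then show ?thesis unfolding comps_alt using 2 by blast
    qed
  qed
qed

lemma handshake:
  fixes P :: "'p piece list"
  assumes U: "U = {..<length P}" and x0: "x0 \<in> U"
    and tl1: "{x \<in> U \<times> UNIV. psrc P x = t} = {(x0, b0)}"
    and hd1: "{x \<in> U \<times> UNIV. psrc P x = h} = {(y0, b1)}"
    and ev: "\<And>p. p \<noteq> t \<Longrightarrow> p \<noteq> h \<Longrightarrow> even (card {x \<in> U \<times> UNIV. psrc P x = p})"
    and th: "t \<noteq> h"
  shows "y0 \<in> (shrel P U)\<^sup>* `` {x0}"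
proof (rule ccontr)
  assume ny: "y0 \<notin> (shrel P U)\<^sup>* `` {x0}"
  define C where "C = (shrel P U)\<^sup>* `` {x0}"
  define E where "E = C \<times> (UNIV :: bool set)"
  have CU: "C \<subseteq> U" unfolding C_def using cls_sub x0 by metis
  have finU: "finite U" using U by simp
  have finC: "finite C" using CU finU finite_subset by auto
  have finE: "finite E" unfolding E_def using finC by simp
  have share_ep: "share P i j" if "psrc P (i, b) = psrc P (j, b')" for i j b b'
    using that by (cases b; cases b') (auto simp: share_def)
  have clos: "(j, b') \<in> E" if "(i, b) \<in> E" "j \<in> U" "psrc P (j, b') = psrc P (i, b)" for i j b b'
  proof -
    have "i \<in> C" using that E_def by auto
    moreover have "share P i j" using share_ep[of i b j b'] that(3) by simp
    ultimately have "(i, j) \<in> shrel P U" using that CU by (auto simp: shrel_def)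
    then have "j \<in> C" using \<open>i \<in> C\<close> unfolding C_def by (meson Image_singleton_iff rtrancl.rtrancl_into_rtrancl)
    then show ?thesis by (simp add: E_def)
  qed
  have fib: "{x \<in> E. psrc P x = p} = {x \<in> U \<times> UNIV. psrc P x = p}" if pE: "p \<in> psrc P ` E" for p
  proof -
    obtain x where x: "x \<in> E" "p = psrc P x" using pE by blast
    obtain i b where ib: "(i, b) \<in> E" "p = psrc P (i, b)" using x by (cases x) blast
    show ?thesis using clos[OF ib(1)] ib CU unfolding E_def by auto
  qed
  have hE: "h \<notin> psrc P ` E"
  proof
    assume "h \<in> psrc P ` E"
    then have "(y0, b1) \<in> {x \<in> E. psrc P x = h}" using fib hd1 by simp
    then show False using ny by (simp add: E_def C_def)
  qed
  have x0C: "x0 \<in> C" by (simp add: C_def)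
  have tE: "t \<in> psrc P ` E"
  proof -
    have "(x0, b0) \<in> E" using x0C by (simp add: E_def)
    moreover have "psrc P (x0, b0) = t" using tl1 by blast
    ultimately show ?thesis by (metis image_eqI)
  qed
  have cardE: "card E = (\<Sum>p\<in>psrc P ` E. card {x \<in> E. psrc P x = p})"
  proof -
    have "card E = (\<Sum>x\<in>E. (1::nat))" by simp
    also have "\<dots> = (\<Sum>p\<in>psrc P ` E. (\<Sum>x\<in>{x \<in> E. psrc P x = p}. (1::nat)))"
      by (rule sum.image_gen[OF finE])
    also have "\<dots> = (\<Sum>p\<in>psrc P ` E. card {x \<in> E. psrc P x = p})"
      by (intro sum.cong refl) simp
    finally show ?thesis .
  qed
  have evE: "even (card E)" unfolding E_def by (simp add: card_cartesian_product)
  have odds: "{p \<in> psrc P ` E. odd (card {x \<in> E. psrc P x = p})} = {t}"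
  proof (intro set_eqI iffI)
    fix p assume p: "p \<in> {p \<in> psrc P ` E. odd (card {x \<in> E. psrc P x = p})}"
    from p have pE: "p \<in> psrc P ` E" and o: "odd (card {x \<in> E. psrc P x = p})" by blast+
    then have "p \<noteq> h" using hE by blast
    moreover have "odd (card {x \<in> U \<times> UNIV. psrc P x = p})" using o unfolding fib[OF pE] .
    ultimately show "p \<in> {t}" using ev by blast
  next
    fix p assume "p \<in> {t}"
    then show "p \<in> {p \<in> psrc P ` E. odd (card {x \<in> E. psrc P x = p})}"
      using tE fib tl1 by auto
  qed
  have "even (card {p \<in> psrc P ` E. odd (card {x \<in> E. psrc P x = p})})"
    using evE cardE even_sum_iff[of "psrc P ` E" "\<lambda>p. card {x \<in> E. psrc P x = p}"] finE by simp
  then show False using odds by simp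
qed

lemma nth_concat_const:
  assumes "\<And>x. x \<in> set xs \<Longrightarrow> length (h x) = m" "c < length xs" "k < m"
  shows "concat (map h xs) ! (m * c + k) = h (xs ! c) ! k"
  using assms
proof (induction xs arbitrary: c)
  case Nil then show ?case by simp
next
  case (Cons x xs)
  show ?case
  proof (cases c)
    case 0 then show ?thesis using Cons by (simp add: nth_append)
  next
    case (Suc c')
    have "m * c + k = m + (m * c' + k)" using Suc by simp
    then show ?thesis using Cons Suc by (simp add: nth_append)
  qed
qed

lemma length_concat_const:
  "(\<And>x. x \<in> set xs \<Longrightarrow> length (h x) = m) \<Longrightarrow> length (concat (map h xs)) = m * length xs"
  by (induction xs) auto

lemma len_smooth[simp]: "length (smooth_arcs D c a) = 2"
  by (simp add: smooth_arcs_def Let_def)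

lemma len_seg[simp]: "length (seg_pieces D) = 2 * ncr D + 1"
  by (simp add: seg_pieces_def)

lemma seg_nth: "j < 2 * ncr D + 1 \<Longrightarrow>
   seg_pieces D ! j = (seg_start D j, seg_end D j, replicate (nbars D j) Bar)"
  by (simp add: seg_pieces_def del: upt_Suc)

definition arcq :: "tkd \<Rightarrow> nat \<Rightarrow> bool \<Rightarrow> nat \<Rightarrow> pt piece" where
  "arcq D c a k = (case smooth_arcs D c a ! k of (p, q) \<Rightarrow>
      (Cr c p, Cr c q, if oriented_smoothing D c a then [] else [Arr True]))"

lemma orient_flip: "oriented_smoothing D c (\<not> a) = (\<not> oriented_smoothing D c a)"
  by (cases "csign D c"; cases a)
     (simp_all add: oriented_smoothing_def smooth_arcs_def ccw_ends_def Let_def is_in_def)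

lemma len_sp[simp]: "length (state_pieces D S) = 4 * ncr D + 1"
  by (simp add: state_pieces_def length_concat_const[where m=2])

lemma sp_seg: "j < 2 * ncr D + 1 \<Longrightarrow> state_pieces D S ! j = seg_pieces D ! j"
  by (simp add: state_pieces_def nth_append)

lemma sp_arc: "c < ncr D \<Longrightarrow> k < 2 \<Longrightarrow>
   state_pieces D S ! (2 * ncr D + 1 + (2 * c + k)) = arcq D c (c \<in> S) k"
proof -
  assume a: "c < ncr D" "k < 2"
  let ?h = "\<lambda>c. map (\<lambda>(p, q). (Cr c p, Cr c q,
                     if oriented_smoothing D c (c \<in> S) then [] else [Arr True]))
                   (smooth_arcs D c (c \<in> S))"
  have "concat (map ?h [0..<ncr D]) ! (2 * c + k) = ?h ([0..<ncr D] ! c) ! k"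
    by (rule nth_concat_const) (use a in auto)
  then show ?thesis using a
    by (simp add: state_pieces_def nth_append arcq_def split: prod.splits)
qed

lemma len_rg[simp]: "length (rg_pieces (GsK D S)) = 6 * ncr D + 2"
  by (simp add: GsK_def length_concat_const[where m=4])

lemma rg_0: "rg_pieces (GsK D S) ! 0 = (PM, (Hd, Tl, []))"
  by (simp add: GsK_def)

lemma rg_seg: "j < 2 * ncr D + 1 \<Longrightarrow> rg_pieces (GsK D S) ! Suc j = (PV, seg_pieces D ! j)"
  by (simp add: GsK_def nth_append)

lemma rg_arc: "c < ncr D \<Longrightarrow> k < 4 \<Longrightarrow>
   rg_pieces (GsK D S) ! (2 * ncr D + 2 + (4 * c + k)) =
     (if k < 2 then (PA c, arcq D c (c \<in> S) k) else (PS c, arcq D c (c \<notin> S) (k - 2)))"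
proof -
  assume a: "c < ncr D" "k < 4"
  let ?h = "\<lambda>c. map (\<lambda>(p, q). (PA c, (Cr c p, Cr c q,
                 if oriented_smoothing D c (c \<in> S) then [] else [Arr True])))
              (smooth_arcs D c (c \<in> S)) @
          map (\<lambda>(p, q). (PS c, (Cr c p, Cr c q,
                 if oriented_smoothing D c (c \<in> S) then [Arr True] else [])))
              (smooth_arcs D c (c \<notin> S))"
  have "concat (map ?h [0..<ncr D]) ! (4 * c + k) = ?h ([0..<ncr D] ! c) ! k"
    by (rule nth_concat_const) (use a in auto)
  moreover have "rg_pieces (GsK D S) ! (2 * ncr D + 2 + (4 * c + k)) = concat (map ?h [0..<ncr D]) ! (4 * c + k)"
    by (simp add: GsK_def nth_append)
  ultimately show ?thesis using a
    by (auto simp add: nth_append arcq_def orient_flip split: prod.splits)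
qed

definition sig :: "nat \<Rightarrow> nat set \<Rightarrow> nat \<Rightarrow> nat" where
  "sig n F i = (if i < 2 * n + 1 then Suc i else
     2 * n + 2 + (4 * ((i - (2 * n + 1)) div 2) +
       ((if (i - (2 * n + 1)) div 2 \<in> F then 2 else 0) + (i - (2 * n + 1)) mod 2)))"

lemma sig_seg: "i < 2 * n + 1 \<Longrightarrow> sig n F i = Suc i"
  by (simp add: sig_def)

lemma sig_arc: "k < 2 \<Longrightarrow> sig n F (2 * n + 1 + (2 * c + k)) =
   2 * n + 2 + (4 * c + ((if c \<in> F then 2 else 0) + k))"
  by (simp add: sig_def)

lemma decomp_sp: "(i::nat) < 4 * n + 1 \<Longrightarrow> \<not> i < 2 * n + 1 \<Longrightarrow>
   \<exists>c k. c < n \<and> k < 2 \<and> i = 2 * n + 1 + (2 * c + k)"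
  by (rule exI[of _ "(i - (2 * n + 1)) div 2"], rule exI[of _ "(i - (2 * n + 1)) mod 2"]) auto

lemma decomp_rg: "(i::nat) < 6 * n + 2 \<Longrightarrow> \<not> i < 2 * n + 2 \<Longrightarrow>
   \<exists>c k. c < n \<and> k < 4 \<and> i = 2 * n + 2 + (4 * c + k)"
  by (rule exI[of _ "(i - (2 * n + 2)) div 4"], rule exI[of _ "(i - (2 * n + 2)) mod 4"]) auto

lemma decomp3: "(i::nat) < 6 * n + 2 \<Longrightarrow> i = 0 \<or> (\<exists>j. i = Suc j \<and> j < 2 * n + 1) \<or>
   (\<exists>c k. c < n \<and> k < 4 \<and> i = 2 * n + 2 + (4 * c + k))"
proof -
  assume i: "i < 6 * n + 2"
  show ?thesis
  proof (cases "i < 2 * n + 2")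
    case True
    then show ?thesis by (cases i) auto
  next
    case False then show ?thesis using decomp_rg[OF i] by blast
  qed
qed

lemma four_eq: "(x::nat) < 4 \<Longrightarrow> y < 4 \<Longrightarrow> 4 * c + x = 4 * c' + y \<Longrightarrow> c = c' \<and> x = y"
proof -
  assume a: "x < 4" "y < 4" "4 * c + x = 4 * c' + y"
  have "(4 * c + x) div 4 = c" using a by simp
  moreover have "(4 * c' + y) div 4 = c'" using a by simp
  ultimately have "c = c'" using a by simp
  then show ?thesis using a by linarith
qed

lemma sig_inj: "inj_on (sig n F) {..<4 * n + 1}"
proof
  fix i j assume i: "i \<in> {..<4 * n + 1}" and j: "j \<in> {..<4 * n + 1}" and e: "sig n F i = sig n F j"
  have big: "sig n F (2 * n + 1 + (2 * c + k)) \<ge> 2 * n + 2" if "k < 2" for c k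
    using sig_arc[OF that, of n F c] by simp
  show "i = j"
  proof (cases "i < 2 * n + 1")
    case True
    have si: "sig n F i = Suc i" using True by (rule sig_seg)
    show ?thesis
    proof (cases "j < 2 * n + 1")
      case True then show ?thesis using si e sig_seg[OF True, of F] by simp
    next
      case False
      then obtain c k where ck: "k < 2" "j = 2 * n + 1 + (2 * c + k)" using decomp_sp j by blast
      have "sig n F j \<ge> 2 * n + 2" using big[OF ck(1), of c] ck(2) by simp
      then show ?thesis using si e \<open>i < 2 * n + 1\<close> by linarith
    qed
  next
    case False
    then obtain c k where ck: "k < 2" "i = 2 * n + 1 + (2 * c + k)" using decomp_sp i by blast
    have sbi: "sig n F i \<ge> 2 * n + 2" using big[OF ck(1), of c] ck(2) by simp
    show ?thesis
    proof (cases "j < 2 * n + 1")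
      case True
      have "sig n F j = Suc j" using True by (rule sig_seg)
      then show ?thesis using sbi e True by linarith
    next
      case False
      then obtain c' k' where ck': "k' < 2" "j = 2 * n + 1 + (2 * c' + k')" using decomp_sp j by blast
      have "4 * c + ((if c \<in> F then 2 else 0) + k) = 4 * c' + ((if c' \<in> F then 2 else 0) + k')"
        using e ck ck' sig_arc[OF ck(1), of n F c] sig_arc[OF ck'(1), of n F c'] by simp
      moreover have "(if c \<in> F then 2 else 0) + k < 4" "(if c' \<in> F then 2 else 0) + k' < (4::nat)"
        using ck ck' by auto
      ultimately have "c = c' \<and> (if c \<in> F then 2 else 0) + k = (if c' \<in> F then 2 else 0) + k'"
        using four_eq by blast
      then show ?thesis using ck ck' by auto
    qed
  qed
qed

lemma sig_0: "0 \<notin> sig n F ` A"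
  by (auto simp: sig_def)

lemma sig_eq: "i < 4 * ncr D + 1 \<Longrightarrow>
   rg_P (GsK D S) ! sig (ncr D) F i = state_pieces D ((S - F) \<union> (F - S)) ! i"
proof (cases "i < 2 * ncr D + 1")
  case True
  assume "i < 4 * ncr D + 1"
  then show ?thesis using True by (simp add: rg_P_def sig_seg rg_seg sp_seg)
next
  case False
  assume "i < 4 * ncr D + 1"
  then obtain c k where ck: "c < ncr D" "k < 2" "i = 2 * ncr D + 1 + (2 * c + k)" using decomp_sp False by blast
  have l: "sig (ncr D) F i < length (rg_pieces (GsK D S))" using ck sig_arc[of k "ncr D" F c] by simp
  show ?thesis
  proof (cases "c \<in> F")
    case True
    then show ?thesis using ck l rg_arc[of c D "2 + k" S] sig_arc[of k "ncr D" F c] sp_arc[of c D k "(S - F) \<union> (F - S)"] by (simp add: rg_P_def)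
  next
    case False
    then show ?thesis using ck l rg_arc[of c D k S] sig_arc[of k "ncr D" F c] sp_arc[of c D k "(S - F) \<union> (F - S)"] by (simp add: rg_P_def)
  qed
qed

lemma rg_kind: "i < 6 * ncr D + 2 \<Longrightarrow> fst (rg_pieces (GsK D S) ! i) =
   (if i = 0 then PM else if i < 2 * ncr D + 2 then PV else
    if (i - (2 * ncr D + 2)) mod 4 < 2 then PA ((i - (2 * ncr D + 2)) div 4)
    else PS ((i - (2 * ncr D + 2)) div 4))"
proof -
  assume i: "i < 6 * ncr D + 2"
  consider "i = 0" | j where "i = Suc j" "j < 2 * ncr D + 1" | c k where "c < ncr D" "k < 4" "i = 2 * ncr D + 2 + (4 * c + k)"
    using decomp3[OF i] by blast
  then show ?thesis
  proof cases
    case 1 then show ?thesis by (simp add: rg_0)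
  next
    case 2 then show ?thesis by (simp add: rg_seg)
  next
    case 3 then show ?thesis using rg_arc[of c D k S] by simp
  qed
qed

lemma mark_0: "mark_idx (GsK D S) = 0"
proof -
  have "\<And>i. (i < length (rg_pieces (GsK D S)) \<and> fst (rg_pieces (GsK D S) ! i) = PM) = (i = 0)"
    by (auto simp: rg_0 rg_kind split: if_splits)
  then show ?thesis unfolding mark_idx_def by simp
qed

lemma bd_seg: "j < 2 * ncr D + 1 \<Longrightarrow> Suc j \<in> bdry_idx (GsK D S) F"
proof -
  assume j: "j < 2 * ncr D + 1"
  have l: "Suc j < length (rg_pieces (GsK D S))" using j by simp
  show ?thesis unfolding bdry_idx_def mem_Collect_eq rg_seg[OF j] using l by simp
qed

lemma bd_0: "0 \<in> bdry_idx (GsK D S) F"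
  unfolding bdry_idx_def mem_Collect_eq rg_0 by simp

lemma bd_arc: "c < ncr D \<Longrightarrow> k < 4 \<Longrightarrow>
  (2 * ncr D + 2 + (4 * c + k) \<in> bdry_idx (GsK D S) F) = (if k < 2 then c \<notin> F else c \<in> F)"
proof -
  assume a: "c < ncr D" "k < 4"
  have l: "2 * ncr D + 2 + (4 * c + k) < length (rg_pieces (GsK D S))" using a by simp
  show ?thesis unfolding bdry_idx_def mem_Collect_eq rg_arc[OF a] using l by simp
qed

lemma bdry_eq: "bdry_idx (GsK D S) F = insert 0 (sig (ncr D) F ` {..<4 * ncr D + 1})"
proof (intro set_eqI iffI)
  fix i assume i: "i \<in> bdry_idx (GsK D S) F"
  then have il: "i < 6 * ncr D + 2" by (simp add: bdry_idx_def)
  consider "i = 0" | j where "i = Suc j" "j < 2 * ncr D + 1" | c k where "c < ncr D" "k < 4" "i = 2 * ncr D + 2 + (4 * c + k)"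
    using decomp3[OF il] by blast
  then show "i \<in> insert 0 (sig (ncr D) F ` {..<4 * ncr D + 1})"
  proof cases
    case 1 then show ?thesis by simp
  next
    case 2 then have "i = sig (ncr D) F j" by (simp add: sig_seg)
    then show ?thesis using 2 by auto
  next
    case 3
    have bd: "(if k < 2 then c \<notin> F else c \<in> F)" using bd_arc[OF 3(1,2), of S F] i 3(3) by simp
    show ?thesis
    proof (cases "k < 2")
      case True
      then have "c \<notin> F" using bd by simp
      then have "i = sig (ncr D) F (2 * ncr D + 1 + (2 * c + k))" using 3 True sig_arc[of k "ncr D" F c] by simp
      moreover have "2 * ncr D + 1 + (2 * c + k) < 4 * ncr D + 1" using 3 True by simp
      ultimately show ?thesis by blast
    next
      case False
      then have "c \<in> F" using bd by simp
      then have "i = sig (ncr D) F (2 * ncr D + 1 + (2 * c + (k - 2)))" using 3 False sig_arc[of "k - 2" "ncr D" F c] by simp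
      moreover have "2 * ncr D + 1 + (2 * c + (k - 2)) < 4 * ncr D + 1" using 3 False by simp
      ultimately show ?thesis by blast
    qed
  qed
next
  fix i assume i: "i \<in> insert 0 (sig (ncr D) F ` {..<4 * ncr D + 1})"
  show "i \<in> bdry_idx (GsK D S) F"
  proof (cases "i = 0")
    case True then show ?thesis using bd_0 by simp
  next
    case False
    then obtain j where j: "j < 4 * ncr D + 1" "i = sig (ncr D) F j" using i by auto
    show ?thesis
    proof (cases "j < 2 * ncr D + 1")
      case True then show ?thesis using j bd_seg[OF True] by (simp add: sig_seg)
    next
      case False
      then obtain c k where ck: "c < ncr D" "k < 2" "j = 2 * ncr D + 1 + (2 * c + k)" using decomp_sp j by blast
      show ?thesis
      proof (cases "c \<in> F")
        case True
        have "2 + k < 4" using ck by simp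
        then have "2 * ncr D + 2 + (4 * c + (2 + k)) \<in> bdry_idx (GsK D S) F"
          using bd_arc[OF ck(1), of "2 + k" S F] True by simp
        moreover have "i = 2 * ncr D + 2 + (4 * c + (2 + k))" using j ck True sig_arc[of k "ncr D" F c] by simp
        ultimately show ?thesis by simp
      next
        case False
        have "k < 4" using ck by simp
        then have "2 * ncr D + 2 + (4 * c + k) \<in> bdry_idx (GsK D S) F"
          using bd_arc[OF ck(1), of k S F] False ck by simp
        moreover have "i = 2 * ncr D + 2 + (4 * c + k)" using j ck False sig_arc[of k "ncr D" F c] by simp
        ultimately show ?thesis by simp
      qed
    qed
  qed
qed

definition isov :: "xend \<Rightarrow> bool" where "isov h \<longleftrightarrow> h = InO \<or> h = OutO"
definition isout :: "xend \<Rightarrow> bool" where "isout h \<longleftrightarrow> h = OutO \<or> h = OutU"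

lemma seg_start_cr: "j < 2 * ncr D + 1 \<Longrightarrow> length (gseq D) = 2 * ncr D \<Longrightarrow>
  (seg_start D j = Cr c h) = (j \<ge> 1 \<and> gseq D ! (j - 1) = (c, isov h) \<and> isout h)"
  by (cases "gseq D ! (j - 1)"; cases h) (auto simp: seg_start_def isov_def isout_def)

lemma seg_end_cr: "j < 2 * ncr D + 1 \<Longrightarrow>
  (seg_end D j = Cr c h) = (j < 2 * ncr D \<and> gseq D ! j = (c, isov h) \<and> \<not> isout h)"
  by (cases "gseq D ! j"; cases h) (auto simp: seg_end_def isov_def isout_def)

lemma seg_start_tl: "(seg_start D j = Tl) = (j = 0)"
  by (cases "gseq D ! (j - 1)") (auto simp: seg_start_def)

lemma seg_start_hd: "seg_start D j \<noteq> Hd"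
  by (cases "gseq D ! (j - 1)") (auto simp: seg_start_def)

lemma seg_end_hd: "(seg_end D j = Hd) = (j = 2 * ncr D)"
  by (cases "gseq D ! j") (auto simp: seg_end_def)

lemma seg_end_tl: "seg_end D j \<noteq> Tl"
  by (cases "gseq D ! j") (auto simp: seg_end_def)

lemma psp_seg: "j < 2 * ncr D + 1 \<Longrightarrow>
   psrc (state_pieces D S) (j, b) = (if b then seg_start D j else seg_end D j)"
  by (simp add: sp_seg seg_nth)

lemma psp_arc: "c < ncr D \<Longrightarrow> k < 2 \<Longrightarrow>
   psrc (state_pieces D S) (2 * ncr D + 1 + (2 * c + k), b) =
     Cr c (if b then fst (smooth_arcs D c (c \<in> S) ! k) else snd (smooth_arcs D c (c \<in> S) ! k))"
  unfolding psrc.simps sp_arc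
  by (simp add: arcq_def split: prod.splits)

lemma arc_ends:
  "\<exists>k0\<in>{0::nat, 1}. \<exists>b0\<in>{True, False}. \<forall>k\<in>{0::nat, 1}. \<forall>b\<in>{True, False}.
     ((if b then fst (smooth_arcs D c a ! k) else snd (smooth_arcs D c a ! k)) = h) = (k = k0 \<and> b = b0)"
  by (cases "csign D c"; cases a; cases h) (simp_all add: smooth_arcs_def ccw_ends_def Let_def ex_bool_eq all_bool_eq)

lemma arc_ends2:
  obtains k0 b0 where "k0 < 2" "\<And>k b. k < 2 \<Longrightarrow>
     ((if b then fst (smooth_arcs D c a ! k) else snd (smooth_arcs D c a ! k)) = h) = (k = k0 \<and> b = b0)"
proof -
  from arc_ends[of D c a h] obtain k0 b0 where k0: "k0 \<in> {0::nat, 1}" and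
    all: "\<forall>k\<in>{0::nat, 1}. \<forall>b\<in>{True, False}.
     ((if b then fst (smooth_arcs D c a ! k) else snd (smooth_arcs D c a ! k)) = h) = (k = k0 \<and> b = b0)"
    by blast
  have "k < 2 \<Longrightarrow> k \<in> {0::nat, 1}" for k by auto
  then show ?thesis using that[of k0 b0] k0 all by auto
qed

lemma gs_len: "twisted_knotoid_diagram D \<Longrightarrow> length (gseq D) = 2 * ncr D"
proof -
  assume t: "twisted_knotoid_diagram D"
  then have "length (gseq D) = card (set (gseq D))"
    using distinct_card by (metis twisted_knotoid_diagram_def)
  also have "\<dots> = card ({..<ncr D} \<times> (UNIV :: bool set))" using t by (simp add: twisted_knotoid_diagram_def)
  also have "\<dots> = 2 * ncr D" by (simp add: card_cartesian_product mult.commute)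
  finally show ?thesis .
qed

lemma gs_lt: "twisted_knotoid_diagram D \<Longrightarrow> t < 2 * ncr D \<Longrightarrow> gseq D ! t = (c, ov) \<Longrightarrow> c < ncr D"
proof -
  assume a: "twisted_knotoid_diagram D" "t < 2 * ncr D" "gseq D ! t = (c, ov)"
  then have "(c, ov) \<in> set (gseq D)" using gs_len by (metis nth_mem)
  then show ?thesis using a by (auto simp: twisted_knotoid_diagram_def)
qed

lemma gs_ex: "twisted_knotoid_diagram D \<Longrightarrow> c < ncr D \<Longrightarrow> \<exists>t < 2 * ncr D. gseq D ! t = (c, ov)"
proof -
  assume a: "twisted_knotoid_diagram D" "c < ncr D"
  then have "(c, ov) \<in> set (gseq D)" by (auto simp: twisted_knotoid_diagram_def)
  then show ?thesis using gs_len[OF a(1)] by (metis in_set_conv_nth)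
qed

lemma gs_uniq: "twisted_knotoid_diagram D \<Longrightarrow> t < 2 * ncr D \<Longrightarrow> t' < 2 * ncr D \<Longrightarrow>
   gseq D ! t = gseq D ! t' \<Longrightarrow> t = t'"
  using gs_len nth_eq_iff_index_eq by (metis twisted_knotoid_diagram_def)

lemma idx_cases:
  assumes "(i::nat) < 4 * n + 1"
  obtains "i < 2 * n + 1" | c k where "c < n" "k < 2" "i = 2 * n + 1 + (2 * c + k)"
  using decomp_sp[OF assms] by blast

lemma fib_tl: "{x \<in> {..<4 * ncr D + 1} \<times> UNIV. psrc (state_pieces D S) x = Tl} = {(0, True)}"
proof (intro set_eqI iffI)
  fix x assume x: "x \<in> {x \<in> {..<4 * ncr D + 1} \<times> UNIV. psrc (state_pieces D S) x = Tl}"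
  obtain i b where ib: "x = (i, b)" by (cases x)
  have i: "i < 4 * ncr D + 1" and e: "psrc (state_pieces D S) (i, b) = Tl" using x ib by auto
  from i show "x \<in> {(0, True)}"
  proof (cases rule: idx_cases)
    case 1
    then have "(if b then seg_start D i else seg_end D i) = Tl" using e psp_seg by metis
    then show ?thesis using ib by (cases b) (auto simp: seg_start_tl seg_end_tl)
  next
    case (2 c k)
    then show ?thesis using e psp_arc[OF 2(1,2), of S b] by simp
  qed
next
  fix x assume "x \<in> {(0::nat, True)}"
  then show "x \<in> {x \<in> {..<4 * ncr D + 1} \<times> UNIV. psrc (state_pieces D S) x = Tl}"
    using psp_seg[of 0 D S True] by (simp add: seg_start_tl)
qed

lemma fib_hd: "{x \<in> {..<4 * ncr D + 1} \<times> UNIV. psrc (state_pieces D S) x = Hd} = {(2 * ncr D, False)}"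
proof (intro set_eqI iffI)
  fix x assume x: "x \<in> {x \<in> {..<4 * ncr D + 1} \<times> UNIV. psrc (state_pieces D S) x = Hd}"
  obtain i b where ib: "x = (i, b)" by (cases x)
  have i: "i < 4 * ncr D + 1" and e: "psrc (state_pieces D S) (i, b) = Hd" using x ib by auto
  from i show "x \<in> {(2 * ncr D, False)}"
  proof (cases rule: idx_cases)
    case 1
    then have "(if b then seg_start D i else seg_end D i) = Hd" using e psp_seg by metis
    then show ?thesis using ib by (cases b) (auto simp: seg_start_hd seg_end_hd)
  next
    case (2 c k)
    then show ?thesis using e psp_arc[OF 2(1,2), of S b] by simp
  qed
next
  fix x assume "x \<in> {(2 * ncr D, False)}"
  then show "x \<in> {x \<in> {..<4 * ncr D + 1} \<times> UNIV. psrc (state_pieces D S) x = Hd}"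
    using psp_seg[of "2 * ncr D" D S False] by (simp add: seg_end_hd)
qed

lemma fib_cr:
  assumes t: "twisted_knotoid_diagram D"
  shows "even (card {x \<in> {..<4 * ncr D + 1} \<times> UNIV. psrc (state_pieces D S) x = Cr c h})"
proof (cases "c < ncr D")
  case False
  have "{x \<in> {..<4 * ncr D + 1} \<times> UNIV. psrc (state_pieces D S) x = Cr c h} = {}"
  proof (intro set_eqI iffI)
    fix x assume x: "x \<in> {x \<in> {..<4 * ncr D + 1} \<times> UNIV. psrc (state_pieces D S) x = Cr c h}"
    obtain i b where ib: "x = (i, b)" by (cases x)
    have i: "i < 4 * ncr D + 1" and e: "psrc (state_pieces D S) (i, b) = Cr c h" using x ib by auto
    from i show "x \<in> {}"
    proof (cases rule: idx_cases)
      case 1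
      then have se: "(if b then seg_start D i else seg_end D i) = Cr c h" using e psp_seg by metis
      show ?thesis
      proof (cases b)
        case True
        then have "i \<ge> 1" "gseq D ! (i - 1) = (c, isov h)" using se seg_start_cr[OF 1 gs_len[OF t]] by auto
        moreover have "i - 1 < 2 * ncr D" using 1 \<open>i \<ge> 1\<close> by simp
        ultimately have "c < ncr D" using gs_lt[OF t] by blast
        then show ?thesis using False by simp
      next
        case False
        then have "i < 2 * ncr D" "gseq D ! i = (c, isov h)" using se seg_end_cr[OF 1] by auto
        then have "c < ncr D" using gs_lt[OF t] by blast
        then show ?thesis using \<open>\<not> c < ncr D\<close> by simp
      qed
    next
      case (2 c' k)
      then show ?thesis using e psp_arc[OF 2(1,2), of S b] False by simp
    qed
  qed simp
  then show ?thesis by (metis card.empty even_zero)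
next
  case True
  obtain t0 where t0: "t0 < 2 * ncr D" "gseq D ! t0 = (c, isov h)" using gs_ex[OF t True] by blast
  obtain k0 b0 where k0: "k0 < 2" and kb: "\<And>k b. k < 2 \<Longrightarrow>
     ((if b then fst (smooth_arcs D c (c \<in> S) ! k) else snd (smooth_arcs D c (c \<in> S) ! k)) = h) = (k = k0 \<and> b = b0)"
    using arc_ends2 by blast
  define s where "s = (if isout h then (Suc t0, True) else (t0, False))"
  define a where "a = (2 * ncr D + 1 + (2 * c + k0), b0)"
  have "{x \<in> {..<4 * ncr D + 1} \<times> UNIV. psrc (state_pieces D S) x = Cr c h} = {s, a}"
  proof (intro set_eqI iffI)
    fix x assume x: "x \<in> {x \<in> {..<4 * ncr D + 1} \<times> UNIV. psrc (state_pieces D S) x = Cr c h}"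
    obtain i b where ib: "x = (i, b)" by (cases x)
    have i: "i < 4 * ncr D + 1" and e: "psrc (state_pieces D S) (i, b) = Cr c h" using x ib by auto
    from i show "x \<in> {s, a}"
    proof (cases rule: idx_cases)
      case 1
      then have se: "(if b then seg_start D i else seg_end D i) = Cr c h" using e psp_seg by metis
      show ?thesis
      proof (cases b)
        case True
        then have h: "i \<ge> 1" "gseq D ! (i - 1) = (c, isov h)" "isout h" using se seg_start_cr[OF 1 gs_len[OF t]] by auto
        have "i - 1 < 2 * ncr D" using 1 h by simp
        then have "i - 1 = t0" using gs_uniq[OF t _ t0(1)] h t0 by simp
        then have "i = Suc t0" using h by simp
        then show ?thesis using h ib True by (simp add: s_def)
      next
        case False
        then have h: "i < 2 * ncr D" "gseq D ! i = (c, isov h)" "\<not> isout h" using se seg_end_cr[OF 1] by auto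
        then have "i = t0" using gs_uniq[OF t _ t0(1)] t0 by simp
        then show ?thesis using h ib False by (simp add: s_def)
      qed
    next
      case (2 c' k)
      have "Cr c' (if b then fst (smooth_arcs D c' (c' \<in> S) ! k) else snd (smooth_arcs D c' (c' \<in> S) ! k)) = Cr c h"
        using e psp_arc[OF 2(1,2), of S b] 2(3) by simp
      then have "c' = c" and hh: "(if b then fst (smooth_arcs D c (c \<in> S) ! k) else snd (smooth_arcs D c (c \<in> S) ! k)) = h"
        by auto
      then have "k = k0 \<and> b = b0" using kb[OF 2(2)] by simp
      then show ?thesis using 2 \<open>c' = c\<close> ib by (simp add: a_def)
    qed
  next
    fix x assume "x \<in> {s, a}"
    then consider "x = s" | "x = a" by blast
    then show "x \<in> {x \<in> {..<4 * ncr D + 1} \<times> UNIV. psrc (state_pieces D S) x = Cr c h}"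
    proof cases
      case 1
      show ?thesis
      proof (cases "isout h")
        case True
        have l: "Suc t0 < 2 * ncr D + 1" using t0 by simp
        have "seg_start D (Suc t0) = Cr c h" using seg_start_cr[OF l gs_len[OF t]] t0 True by simp
        then show ?thesis using 1 True psp_seg[OF l, of S True] t0 by (simp add: s_def)
      next
        case False
        have l: "t0 < 2 * ncr D + 1" using t0 by simp
        have "seg_end D t0 = Cr c h" using seg_end_cr[OF l] t0 False by simp
        then show ?thesis using 1 False psp_seg[OF l, of S False] t0 by (simp add: s_def)
      qed
    next
      case 2
      have "(if b0 then fst (smooth_arcs D c (c \<in> S) ! k0) else snd (smooth_arcs D c (c \<in> S) ! k0)) = h"
        using kb[OF k0] by simp
      then show ?thesis using 2 psp_arc[OF True k0, of S b0] True k0 by (simp add: a_def)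
    qed
  qed
  moreover have "s \<noteq> a" using t0 by (auto simp: s_def a_def)
  ultimately show ?thesis by simp
qed

lemma trail_Cons: "trail P (x # xs) = ((xs = [] \<or> ptgt P x = psrc P (hd xs)) \<and> trail P xs)"
proof
  assume t: "trail P (x # xs)"
  have 1: "xs = [] \<or> ptgt P x = psrc P (hd xs)"
    using t[unfolded trail_def, rule_format, of 0] by (cases xs) auto
  have 2: "trail P xs" unfolding trail_def
  proof (intro allI impI)
    fix k assume "Suc k < length xs"
    then show "ptgt P (xs ! k) = psrc P (xs ! Suc k)"
      using t[unfolded trail_def, rule_format, of "Suc k"] by simp
  qed
  show "(xs = [] \<or> ptgt P x = psrc P (hd xs)) \<and> trail P xs" using 1 2 by blast
next
  assume a: "(xs = [] \<or> ptgt P x = psrc P (hd xs)) \<and> trail P xs"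
  show "trail P (x # xs)" unfolding trail_def
  proof (intro allI impI)
    fix k assume k: "Suc k < length (x # xs)"
    show "ptgt P ((x # xs) ! k) = psrc P ((x # xs) ! Suc k)"
    proof (cases k)
      case 0 then show ?thesis using a k by (cases xs) auto
    next
      case (Suc k') then show ?thesis using a k by (simp add: trail_def)
    qed
  qed
qed

locale stp =
  fixes D :: tkd and S F :: "nat set"
  assumes tkd: "twisted_knotoid_diagram D"
begin

abbreviation "n \<equiv> ncr D"
definition "S' = (S - F) \<union> (F - S)"
definition "P = state_pieces D S'"
definition "G = GsK D S"
definition "Q = rg_P G"
definition "\<sigma> = sig n F"
definition "U = {..<4 * n + 1}"
definition "R = shrel P U"
definition "Carc = R\<^sup>* `` {0}"

lemma lenP: "length P = 4 * n + 1" by (simp add: P_def)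

lemma emb: "emb P Q U \<sigma>"
proof
  show "inj_on \<sigma> U" unfolding \<sigma>_def U_def by (rule sig_inj)
  fix i assume "i \<in> U"
  then show "Q ! (\<sigma> i) = P ! i" unfolding Q_def G_def \<sigma>_def P_def S'_def U_def
    using sig_eq by blast
qed

sublocale E: emb P Q U \<sigma> by (rule emb)

lemma sc: "state_comps D S' = comps P U"
  unfolding state_comps_def U_def P_def by simp

lemma U0: "0 \<in> U" by (simp add: U_def)

lemma Carc_in: "Carc \<in> comps P U"
  unfolding comps_alt Carc_def R_def using U0 by blast

lemma zero_Carc: "0 \<in> Carc" by (simp add: Carc_def)

lemma comp0: "C \<in> comps P U \<Longrightarrow> 0 \<in> C \<Longrightarrow> C = Carc"
proof -
  assume a: "C \<in> comps P U" "0 \<in> C"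
  then obtain x where x: "x \<in> U" "C = R\<^sup>* `` {x}" unfolding comps_alt R_def by blast
  then have "(x, 0) \<in> R\<^sup>*" using a by blast
  then have "R\<^sup>* `` {x} = R\<^sup>* `` {0}" unfolding R_def by (rule cls_eq)
  then show ?thesis using x by (simp add: Carc_def)
qed

lemma state_arc_eq: "state_arc D S' = Carc"
proof -
  have "(C \<in> state_comps D S' \<and> 0 \<in> C) = (C = Carc)" for C
  proof
    assume "C \<in> state_comps D S' \<and> 0 \<in> C"
    then show "C = Carc" using comp0 sc by blast
  next
    assume "C = Carc"
    then show "C \<in> state_comps D S' \<and> 0 \<in> C" using Carc_in sc zero_Carc by simp
  qed
  then show ?thesis unfolding state_arc_def by simp
qed

lemma loops_eq: "state_loops D S' = comps P U - {Carc}"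
proof (intro set_eqI iffI)
  fix C assume "C \<in> state_loops D S'"
  then have "C \<in> comps P U" "0 \<notin> C" unfolding state_loops_def sc by blast+
  then show "C \<in> comps P U - {Carc}" using zero_Carc by blast
next
  fix C assume C: "C \<in> comps P U - {Carc}"
  then have "0 \<notin> C" using comp0 by blast
  then show "C \<in> state_loops D S'" using C unfolding state_loops_def sc by blast
qed

lemma CU: "C \<in> comps P U \<Longrightarrow> C \<subseteq> U"
  by (auto simp: comps_alt dest: cls_sub)

lemma hd_in: "2 * n \<in> Carc"
proof -
  have ev: "even (card {x \<in> U \<times> UNIV. psrc P x = p})" if np: "p \<noteq> Tl" "p \<noteq> Hd" for p
  proof -
    obtain c h where "p = Cr c h" using np by (cases p) auto
    then show ?thesis using fib_cr[OF tkd] by (simp add: P_def U_def)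
  qed
  have u: "U = {..<length P}" by (simp add: U_def lenP)
  have tl: "{x \<in> U \<times> UNIV. psrc P x = Tl} = {(0, True)}" unfolding U_def P_def by (rule fib_tl)
  have hd: "{x \<in> U \<times> UNIV. psrc P x = Hd} = {(2 * n, False)}" unfolding U_def P_def by (rule fib_hd)
  have th: "Tl \<noteq> Hd" by simp
  have "2 * n \<in> (shrel P U)\<^sup>* `` {0}"
    by (rule handshake[OF u U0 tl hd ev th])
  then show ?thesis by (simp add: Carc_def R_def)
qed

lemma Q0: "Q ! 0 = (Hd, Tl, [])" by (simp add: Q_def G_def rg_P_def rg_0)

lemma tl_only: "i \<in> U \<Longrightarrow> psrc P (i, b) = Tl \<Longrightarrow> i = 0"
proof -
  assume a: "i \<in> U" "psrc P (i, b) = Tl"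
  have "(i, b) \<in> {x \<in> U \<times> UNIV. psrc P x = Tl}" using a by blast
  then have "(i, b) \<in> {(0, True)}" unfolding U_def P_def fib_tl .
  then show ?thesis by simp
qed

lemma hd_only: "i \<in> U \<Longrightarrow> psrc P (i, b) = Hd \<Longrightarrow> i = 2 * n"
proof -
  assume a: "i \<in> U" "psrc P (i, b) = Hd"
  have "(i, b) \<in> {x \<in> U \<times> UNIV. psrc P x = Hd}" using a by blast
  then have "(i, b) \<in> {(2 * n, False)}" unfolding U_def P_def fib_hd .
  then show ?thesis by simp
qed

lemma share0: "i \<in> U \<Longrightarrow> share Q 0 (\<sigma> i) \<Longrightarrow> i \<in> Carc"
proof -
  assume i: "i \<in> U" and s: "share Q 0 (\<sigma> i)"
  have "{Hd, Tl} \<inter> {fst (P ! i), fst (snd (P ! i))} \<noteq> {}"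
    using s E.eq[OF i] Q0 by (simp add: share_def)
  then have "fst (P ! i) = Hd \<or> fst (P ! i) = Tl \<or> fst (snd (P ! i)) = Hd \<or> fst (snd (P ! i)) = Tl"
    by auto
  moreover have "psrc P (i, True) = fst (P ! i)" "psrc P (i, False) = fst (snd (P ! i))" by simp_all
  ultimately have "i = 0 \<or> i = 2 * n" using tl_only[OF i] hd_only[OF i] by metis
  moreover have "0 \<in> Carc" by (simp add: Carc_def)
  ultimately show ?thesis using hd_in by blast
qed

lemma sig0: "\<sigma> 0 = 1" by (simp add: \<sigma>_def sig_seg)

lemma share01: "share Q 0 (\<sigma> 0)"
proof -
  have "Q ! (\<sigma> 0) = P ! 0" using E.eq U0 by blast
  moreover have "fst (P ! 0) = Tl" using psp_seg[of 0 D S' True] by (simp add: P_def seg_start_tl)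
  ultimately show ?thesis using Q0 by (simp add: share_def)
qed

lemma bc_eq: "bdry_comps G F = insert (insert 0 (\<sigma> ` Carc)) ((\<lambda>C. \<sigma> ` C) ` comps P U - {\<sigma> ` Carc})"
proof -
  have "bdry_comps G F = comps Q (insert 0 (\<sigma> ` U))"
    by (simp add: bdry_comps_def Q_def G_def bdry_eq \<sigma>_def U_def)
  also have "\<dots> = insert (insert 0 (\<sigma> ` Carc)) (comps Q (\<sigma> ` U) - {\<sigma> ` Carc})"
  proof (rule comps_insert)
    show "0 \<notin> \<sigma> ` U" by (simp add: \<sigma>_def sig_0)
    show "\<sigma> ` Carc \<in> comps Q (\<sigma> ` U)" using E.comps_tr Carc_in by simp
    show "\<sigma> 0 \<in> \<sigma> ` Carc" by (simp add: Carc_def)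
    show "share Q 0 (\<sigma> 0)" by (rule share01)
    show "\<forall>j\<in>\<sigma> ` U. share Q 0 j \<longrightarrow> j \<in> \<sigma> ` Carc" using share0 by blast
  qed
  also have "\<dots> = insert (insert 0 (\<sigma> ` Carc)) ((\<lambda>C. \<sigma> ` C) ` comps P U - {\<sigma> ` Carc})"
    using E.comps_tr by simp
  finally show ?thesis .
qed

lemma not0: "0 \<notin> \<sigma> ` A" by (simp add: \<sigma>_def sig_0)

lemma img_inj: "inj_on (\<lambda>C. \<sigma> ` C) (comps P U)"
  by (rule inj_onI) (metis CU E.inj inj_on_image_eq_iff)

lemma circ_eq: "circ_comps G F = (\<lambda>C. \<sigma> ` C) ` state_loops D S'"
proof -
  have "circ_comps G F = (\<lambda>C. \<sigma> ` C) ` comps P U - {\<sigma> ` Carc}"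
    unfolding circ_comps_def bc_eq G_def[symmetric] using not0 by (auto simp: mark_0 G_def)
  also have "\<dots> = (\<lambda>C. \<sigma> ` C) ` (comps P U - {Carc})"
    using img_inj Carc_in by (simp add: inj_on_image_set_diff)
  finally show ?thesis using loops_eq by simp
qed

lemma finP: "finite (comps P U)" by (simp add: finite_comps U_def)

lemma card_bc: "card (bdry_comps G F) = card (state_loops D S') + 1"
proof -
  have "card (bdry_comps G F) = card ((\<lambda>C. \<sigma> ` C) ` comps P U - {\<sigma> ` Carc}) + 1"
  proof -
    have "insert 0 (\<sigma> ` Carc) \<notin> (\<lambda>C. \<sigma> ` C) ` comps P U" using not0 by (metis imageE insertI1)
    then show ?thesis unfolding bc_eq using finP by (subst card_insert_disjoint) auto
  qed
  also have "(\<lambda>C. \<sigma> ` C) ` comps P U - {\<sigma> ` Carc} = (\<lambda>C. \<sigma> ` C) ` state_loops D S'"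
    using img_inj Carc_in loops_eq by (simp add: inj_on_image_set_diff)
  also have "card \<dots> = card (state_loops D S')"
    using img_inj loops_eq by (simp add: card_image inj_on_diff)
  finally show ?thesis .
qed

lemma prod_eq: "(\<Prod>f\<in>circ_comps G F. loop_val K Kh (loop_form Q f)) =
   (\<Prod>C\<in>state_loops D S'. loop_val K Kh (loop_form P C))"
proof -
  have inj: "inj_on (\<lambda>C. \<sigma> ` C) (state_loops D S')"
    using img_inj loops_eq by (simp add: inj_on_diff)
  have "(\<Prod>f\<in>circ_comps G F. loop_val K Kh (loop_form Q f)) =
        (\<Prod>C\<in>state_loops D S'. loop_val K Kh (loop_form Q (\<sigma> ` C)))"
    unfolding circ_eq by (rule prod.reindex[OF inj, unfolded comp_def])
  also have "\<dots> = (\<Prod>C\<in>state_loops D S'. loop_val K Kh (loop_form P C))"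
    by (intro prod.cong refl) (use loops_eq CU E.loop_form_tr in auto)
  finally show ?thesis .
qed

end

context stp begin

lemma Q0s: "psrc Q (0, True) = Hd" "ptgt Q (0, True) = Tl" using Q0 by simp_all

lemma marked_eq: "marked_index G F = arc_index P (state_arc D S')"
proof -
  let ?M = "insert 0 (\<sigma> ` Carc)"
  have CarcU: "Carc \<subseteq> U" using CU Carc_in by blast
  have M_only: "(C \<in> bdry_comps G F \<and> 0 \<in> C) = (C = ?M)" for C
    unfolding bc_eq using not0 by blast
  have mk: "mark_idx G = 0" by (simp add: G_def mark_0)
  have "(\<exists>C xs. C \<in> bdry_comps G F \<and> mark_idx G \<in> C \<and>
      closed_trail (rg_P G) xs \<and> covers xs C \<and> hd xs = (mark_idx G, True) \<and>
      lin_equiv (tword (rg_P G) (tl xs)) (lam_word j)) =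
    (\<exists>xs. xs \<noteq> [] \<and> trail P xs \<and> covers xs Carc \<and>
        psrc P (hd xs) = Tl \<and> ptgt P (last xs) = Hd \<and> lin_equiv (tword P xs) (lam_word j))" for j
  proof
    assume "\<exists>C xs. C \<in> bdry_comps G F \<and> mark_idx G \<in> C \<and>
      closed_trail (rg_P G) xs \<and> covers xs C \<and> hd xs = (mark_idx G, True) \<and>
      lin_equiv (tword (rg_P G) (tl xs)) (lam_word j)"
    then obtain C ys where C: "C \<in> bdry_comps G F" "0 \<in> C" and ct: "closed_trail Q ys"
      and cov: "covers ys C" and h: "hd ys = (0, True)" and le: "lin_equiv (tword Q (tl ys)) (lam_word j)"
      unfolding mk Q_def by blast
    have CM: "C = ?M" using M_only C by blast
    have ne: "ys \<noteq> []" using ct by (simp add: closed_trail_def)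
    define zs where "zs = tl ys"
    have ys: "ys = (0, True) # zs" using ne h by (simp add: zs_def) (metis list.collapse)
    have d: "distinct (0 # map fst zs)" and st: "insert 0 (set (map fst zs)) = ?M"
      using cov CM ys by (simp_all add: covers_def)
    have zsM: "set (map fst zs) = \<sigma> ` Carc" using d st not0 by (metis insert_ident list.set(2) distinct.simps(2) list.simps(9))
    then have zsU: "set (map fst zs) \<subseteq> \<sigma> ` U" using CarcU by blast
    obtain xs where xs: "zs = map E.f xs" "set (map fst xs) \<subseteq> U" using E.fg[OF zsU] by metis
    have xsC: "set (map fst xs) \<subseteq> Carc"
    proof -
      have "\<sigma> ` set (map fst xs) = \<sigma> ` Carc" using zsM xs by (simp add: E.f_def image_image)
      then show ?thesis using E.inj xs(2) CarcU by (simp add: inj_on_image_eq_iff)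
    qed
    have zne: "zs \<noteq> []" using zsM zero_Carc by auto
    then have xne: "xs \<noteq> []" using xs by simp
    have tr: "trail Q ys" using ct by (simp add: closed_trail_def)
    then have trz: "trail Q zs" and first: "ptgt Q (0, True) = psrc Q (hd zs)"
      using ys zne by (simp_all add: trail_Cons)
    have lastz: "ptgt Q (last zs) = Hd" using ct ys zne Q0s by (simp add: closed_trail_def)
    have hx: "fst (hd xs) \<in> U" "fst (last xs) \<in> U" using xs xne by auto
    have "trail P xs" using trz xs E.trail_tr by simp
    moreover have "covers xs Carc"
    proof -
      have "covers zs (\<sigma> ` Carc)" using d zsM by (simp add: covers_def)
      then show ?thesis using E.covers_tr[OF xs(2) CarcU] xs by simp
    qed
    moreover have "psrc P (hd xs) = Tl"
      using first xs xne E.psrc_tr[OF hx(1)] Q0s by (simp add: hd_map)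
    moreover have "ptgt P (last xs) = Hd"
      using lastz xs xne E.ptgt_tr[OF hx(2)] by (simp add: last_map)
    moreover have "lin_equiv (tword P xs) (lam_word j)"
    proof -
      have "tl ys = map E.f xs" using xs(1) by (simp add: zs_def)
      then show ?thesis using le E.tword_tr[OF xs(2)] by simp
    qed
    ultimately show "\<exists>xs. xs \<noteq> [] \<and> trail P xs \<and> covers xs Carc \<and>
        psrc P (hd xs) = Tl \<and> ptgt P (last xs) = Hd \<and> lin_equiv (tword P xs) (lam_word j)"
      using xne by blast
  next
    assume "\<exists>xs. xs \<noteq> [] \<and> trail P xs \<and> covers xs Carc \<and>
        psrc P (hd xs) = Tl \<and> ptgt P (last xs) = Hd \<and> lin_equiv (tword P xs) (lam_word j)"
    then obtain xs where xne: "xs \<noteq> []" and tr: "trail P xs" and cov: "covers xs Carc"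
      and hs: "psrc P (hd xs) = Tl" and lt: "ptgt P (last xs) = Hd" and le: "lin_equiv (tword P xs) (lam_word j)"
      by blast
    have xsU: "set (map fst xs) \<subseteq> U" using cov CarcU by (auto simp: covers_def)
    have hx: "fst (hd xs) \<in> U" "fst (last xs) \<in> U" using xsU xne by auto
    define ys where "ys = (0, True) # map E.f xs"
    have "closed_trail Q ys"
    proof -
      have "trail Q (map E.f xs)" using E.trail_tr[OF xsU] tr by simp
      moreover have "ptgt Q (0, True) = psrc Q (hd (map E.f xs))"
        using hs Q0s E.psrc_tr[OF hx(1)] xne by (simp add: hd_map)
      ultimately have "trail Q ys" by (simp add: ys_def trail_Cons)
      moreover have "ptgt Q (last ys) = psrc Q (hd ys)"
        using lt Q0s E.ptgt_tr[OF hx(2)] xne by (simp add: ys_def last_map)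
      ultimately show ?thesis by (simp add: closed_trail_def ys_def)
    qed
    moreover have "covers ys ?M"
    proof -
      have c: "covers (map E.f xs) (\<sigma> ` Carc)" using E.covers_tr[OF xsU CarcU] cov by simp
      have "0 \<notin> set (map fst (map E.f xs))" using c not0 by (simp add: covers_def)
      then show ?thesis using c by (simp add: covers_def ys_def)
    qed
    moreover have "lin_equiv (tword Q (tl ys)) (lam_word j)" using le E.tword_tr[OF xsU] by (simp add: ys_def)
    moreover have "?M \<in> bdry_comps G F" "0 \<in> ?M" using M_only by blast+
    ultimately show "\<exists>C xs. C \<in> bdry_comps G F \<and> mark_idx G \<in> C \<and>
      closed_trail (rg_P G) xs \<and> covers xs C \<and> hd xs = (mark_idx G, True) \<and>
      lin_equiv (tword (rg_P G) (tl xs)) (lam_word j)"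
      unfolding mk Q_def[symmetric] by (intro exI[of _ ?M] exI[of _ ys]) (simp add: ys_def)
  qed
  then show ?thesis unfolding marked_index_def arc_index_def state_arc_eq by simp
qed

end

lemma alg:
  fixes A B :: "'a::field"
  assumes "A \<noteq> 0" "B \<noteq> 0"
  shows "A ^ (a' + q) * B ^ (m + p) = A ^ (a' + p) * B ^ (m + q) * ((B / A) ^ p * (A / B) ^ q)"
  using assms by (simp add: power_add power_divide field_simps)

lemma final_alg:
  fixes A B d :: "'a::field"
  assumes "A \<noteq> 0" "B \<noteq> 0" "d \<noteq> 0"
  shows "A ^ (a' + q) * B ^ (m + p) * (d ^ c * X) * Lm =
    A ^ (a' + p) * B ^ (m + q) / d * (1 ^ k * ((B / A) ^ p * (A / B) ^ q) * d ^ (c + 1) * X * Lm)"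
proof -
  have "A ^ (a' + q) * B ^ (m + p) = A ^ (a' + p) * B ^ (m + q) * ((B / A) ^ p * (A / B) ^ q)"
    by (rule alg[OF assms(1,2)])
  moreover have "d ^ (c + 1) / d = d ^ c" using assms(3) by simp
  ultimately show ?thesis using assms by (simp add: field_simps)
qed

lemma card_symdiff:
  assumes "S \<subseteq> {..<n}" "F \<subseteq> {..<(n::nat)}"
  shows "card ((S - F) \<union> (F - S)) = card S - card (F \<inter> S) + card (F - S)"
    and "card (F \<inter> S) \<le> card S" and "card (F - S) \<le> n - card S"
proof -
  have fS: "finite S" "finite F" using assms finite_subset by blast+
  have "card ((S - F) \<union> (F - S)) = card (S - F) + card (F - S)"
    using fS by (intro card_Un_disjoint) auto
  moreover have "card (S - F) = card S - card (F \<inter> S)"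
    using fS by (metis card_Diff_subset_Int inf_commute finite_Int)
  ultimately show "card ((S - F) \<union> (F - S)) = card S - card (F \<inter> S) + card (F - S)" by simp
  show "card (F \<inter> S) \<le> card S" using fS by (intro card_mono) auto
  have "F - S \<subseteq> {..<n} - S" using assms by auto
  then have "card (F - S) \<le> card ({..<n} - S)" by (intro card_mono) auto
  also have "\<dots> = n - card S" using assms fS by (simp add: card_Diff_subset)
  finally show "card (F - S) \<le> n - card S" .
qed

lemma prod_bvec:
  assumes "F \<subseteq> {..<ncr D}"
  shows "(\<Prod>e\<in>F. bvec (GsK D S) A B e) = (B / A) ^ card (F \<inter> S) * (A / B) ^ card (F - S)"
proof -
  have fF: "finite F" using assms finite_subset by blast
  have "(\<Prod>e\<in>F. bvec (GsK D S) A B e) = (\<Prod>e\<in>F. if e \<in> S then B / A else A / B)"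
    by (simp add: bvec_def GsK_def)
  also have "\<dots> = (\<Prod>e\<in>F \<inter> S. B / A) * (\<Prod>e\<in>F - S. A / B)"
    using fF by (simp add: prod.If_cases Int_def Diff_eq)
  also have "\<dots> = (B / A) ^ card (F \<inter> S) * (A / B) ^ card (F - S)" by simp
  finally show ?thesis .
qed

lemma term_eq:
  fixes A B d :: "'a::field"
  assumes tkd: "twisted_knotoid_diagram D" and S: "S \<subseteq> {..<ncr D}" and F: "F \<subseteq> {..<ncr D}"
    and nz: "A \<noteq> 0" "B \<noteq> 0" "d \<noteq> 0"
  shows "A ^ card ((S - F) \<union> (F - S)) * B ^ (ncr D - card ((S - F) \<union> (F - S))) *
        (\<Prod>C\<in>state_loops D ((S - F) \<union> (F - S)). d * loop_val K Kh (loop_form (state_pieces D ((S - F) \<union> (F - S))) C)) *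
        L (arc_index (state_pieces D ((S - F) \<union> (F - S))) (state_arc D ((S - F) \<union> (F - S))))
     = A ^ card S * B ^ (ncr D - card S) / d *
        (1 ^ rg_k (GsK D S) F * (\<Prod>e\<in>F. bvec (GsK D S) A B e) * d ^ card (bdry_comps (GsK D S) F) *
        (\<Prod>f\<in>circ_comps (GsK D S) F. loop_val K Kh (loop_form (rg_P (GsK D S)) f)) *
        L (marked_index (GsK D S) F))"
proof -
  interpret st: stp D S F by unfold_locales (rule tkd)
  let ?S' = "(S - F) \<union> (F - S)"
  let ?X = "\<Prod>C\<in>state_loops D ?S'. loop_val K Kh (loop_form (state_pieces D ?S') C)"
  let ?c = "card (state_loops D ?S')"
  let ?Lm = "L (arc_index (state_pieces D ?S') (state_arc D ?S'))"
  have S'd: "st.S' = ?S'" by (simp add: st.S'_def)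
  have Pd: "st.P = state_pieces D ?S'" by (simp add: st.P_def S'd)
  have Gd: "st.G = GsK D S" by (simp add: st.G_def)
  have Qd: "st.Q = rg_P (GsK D S)" by (simp add: st.Q_def Gd)
  have bc: "card (bdry_comps (GsK D S) F) = ?c + 1" using st.card_bc by (simp add: Gd S'd)
  have pr: "(\<Prod>f\<in>circ_comps (GsK D S) F. loop_val K Kh (loop_form (rg_P (GsK D S)) f)) = ?X"
    using st.prod_eq[of K Kh] by (simp add: Gd S'd Qd Pd)
  have mi: "marked_index (GsK D S) F = arc_index (state_pieces D ?S') (state_arc D ?S')"
    using st.marked_eq by (simp add: Gd S'd Pd)
  have dl: "(\<Prod>C\<in>state_loops D ?S'. d * loop_val K Kh (loop_form (state_pieces D ?S') C)) = d ^ ?c * ?X"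
    by (simp add: prod.distrib)
  obtain a' p q m where
    cS: "card S = a' + p" and ncS: "ncr D - card S = m + q" and
    cS': "card ?S' = a' + q" and ncS': "ncr D - card ?S' = m + p" and
    pv: "p = card (F \<inter> S)" and qv: "q = card (F - S)"
  proof -
    have h: "card ?S' = card S - card (F \<inter> S) + card (F - S)" "card (F \<inter> S) \<le> card S"
      "card (F - S) \<le> ncr D - card S" using card_symdiff[OF S F] by auto
    have "card S \<le> ncr D" using S by (metis card_lessThan card_mono finite_lessThan)
    then show ?thesis using h
      by (intro that[of "card S - card (F \<inter> S)" "card (F \<inter> S)" "ncr D - card S - card (F - S)" "card (F - S)"]) auto
  qed
  have n1: "ncr D - (a' + q) = m + p" using ncS' cS' by simp
  have n2: "ncr D - (a' + p) = m + q" using ncS cS by simp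
  show ?thesis
    unfolding dl bc pr mi prod_bvec[OF F] cS' cS n1 n2 pv[symmetric] qv[symmetric]
    by (rule final_alg[OF nz])
qed

lemma epos_eq: "S \<subseteq> {..<ncr D} \<Longrightarrow> epos (GsK D S) = card S"
proof -
  assume S: "S \<subseteq> {..<ncr D}"
  then have "{e \<in> {..<ncr D}. e \<in> S} = S" by auto
  then show ?thesis by (simp add: epos_def GsK_def)
qed

lemma eneg_eq: "S \<subseteq> {..<ncr D} \<Longrightarrow> eneg (GsK D S) = ncr D - card S"
proof -
  assume S: "S \<subseteq> {..<ncr D}"
  have "{e \<in> {..<ncr D}. e \<notin> S} = {..<ncr D} - S" by auto
  then have "eneg (GsK D S) = card ({..<ncr D} - S)" by (simp add: eneg_def GsK_def)
  also have "\<dots> = ncr D - card S" using S by (simp add: card_Diff_subset finite_subset)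
  finally show ?thesis .
qed

lemma part1:
  fixes A B d :: "'a::field"
  assumes tkd: "twisted_knotoid_diagram D" and S: "S \<subseteq> {..<ncr D}"
    and nz: "A \<noteq> 0" "B \<noteq> 0" "d \<noteq> 0"
  shows "tbracket D A B d K Kh L =
           A ^ epos (GsK D S) * B ^ eneg (GsK D S) / d *
           Rt (GsK D S) 1 (bvec (GsK D S) A B) d K Kh L"
proof -
  let ?T = "\<lambda>S'. A ^ card S' * B ^ (ncr D - card S') *
        (\<Prod>C\<in>state_loops D S'. d * loop_val K Kh (loop_form (state_pieces D S') C)) *
        L (arc_index (state_pieces D S') (state_arc D S'))"
  let ?R = "\<lambda>F. 1 ^ rg_k (GsK D S) F * (\<Prod>e\<in>F. bvec (GsK D S) A B e) * d ^ card (bdry_comps (GsK D S) F) *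
        (\<Prod>f\<in>circ_comps (GsK D S) F. loop_val K Kh (loop_form (rg_P (GsK D S)) f)) *
        L (marked_index (GsK D S) F)"
  let ?sd = "\<lambda>F. (S - F) \<union> (F - S)"
  have "tbracket D A B d K Kh L = (\<Sum>S'\<in>Pow {..<ncr D}. ?T S')" by (simp add: tbracket_def)
  also have "\<dots> = (\<Sum>F\<in>Pow {..<ncr D}. ?T (?sd F))"
  proof -
    have inv: "\<And>F. ?sd (?sd F) = F" by blast
    show ?thesis
      by (rule sum.reindex_bij_witness[where i = ?sd and j = ?sd]) (use S inv in auto)
  qed
  also have "\<dots> = (\<Sum>F\<in>Pow {..<ncr D}. A ^ card S * B ^ (ncr D - card S) / d * ?R F)"
    by (intro sum.cong refl term_eq[OF tkd S _ nz]) auto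
  also have "\<dots> = A ^ card S * B ^ (ncr D - card S) / d * (\<Sum>F\<in>Pow {..<ncr D}. ?R F)"
    by (simp add: sum_distrib_left)
  also have "(\<Sum>F\<in>Pow {..<ncr D}. ?R F) = Rt (GsK D S) 1 (bvec (GsK D S) A B) d K Kh L"
    by (simp add: Rt_def GsK_def)
  finally show ?thesis using epos_eq[OF S] eneg_eq[OF S] by simp
qed

theorem mainTheorem12:
  fixes D :: tkd and S :: "nat set"
    and A B d :: "'a::field" and K L :: "nat \<Rightarrow> 'a" and Kh :: 'a
  assumes "twisted_knotoid_diagram D"
    and "S \<subseteq> {..<ncr D}"
    and "A \<noteq> 0" and "B \<noteq> 0" and "d \<noteq> 0"
    and "K 0 = 1" and "L 0 = 1"
  shows "tbracket D A B d K Kh L =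
           A ^ epos (GsK D S) * B ^ eneg (GsK D S) / d *
           Rt (GsK D S) 1 (bvec (GsK D S) A B) d K Kh L
         \<and> (- (A ^ 2) - inverse (A ^ 2) \<noteq> 0 \<longrightarrow>
             tbracketA D A K Kh L =
             A powi (int (epos (GsK D S)) - int (eneg (GsK D S))) / (- (A ^ 2) - inverse (A ^ 2)) *
             Rt (GsK D S) 1 (bvec (GsK D S) A (inverse A)) (- (A ^ 2) - inverse (A ^ 2)) K Kh L)"
proof
  show "tbracket D A B d K Kh L =
           A ^ epos (GsK D S) * B ^ eneg (GsK D S) / d *
           Rt (GsK D S) 1 (bvec (GsK D S) A B) d K Kh L"
    by (rule part1) (use assms in auto)
next
  show "- (A ^ 2) - inverse (A ^ 2) \<noteq> 0 \<longrightarrow>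
             tbracketA D A K Kh L =
             A powi (int (epos (GsK D S)) - int (eneg (GsK D S))) / (- (A ^ 2) - inverse (A ^ 2)) *
             Rt (GsK D S) 1 (bvec (GsK D S) A (inverse A)) (- (A ^ 2) - inverse (A ^ 2)) K Kh L"
  proof
    assume dd: "- (A ^ 2) - inverse (A ^ 2) \<noteq> 0"
    have iA: "inverse A \<noteq> 0" using assms(3) by simp
    have "tbracketA D A K Kh L = A ^ epos (GsK D S) * (inverse A) ^ eneg (GsK D S) / (- (A ^ 2) - inverse (A ^ 2)) *
           Rt (GsK D S) 1 (bvec (GsK D S) A (inverse A)) (- (A ^ 2) - inverse (A ^ 2)) K Kh L"
      unfolding tbracketA_def by (rule part1[OF assms(1,2,3) iA dd])
    moreover have "A ^ epos (GsK D S) * (inverse A) ^ eneg (GsK D S) =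
        A powi (int (epos (GsK D S)) - int (eneg (GsK D S)))"
      using assms(3) by (simp add: power_int_diff power_inverse divide_inverse)
    ultimately show "tbracketA D A K Kh L =
             A powi (int (epos (GsK D S)) - int (eneg (GsK D S))) / (- (A ^ 2) - inverse (A ^ 2)) *
             Rt (GsK D S) 1 (bvec (GsK D S) A (inverse A)) (- (A ^ 2) - inverse (A ^ 2)) K Kh L"
      by simp
  qed
qed

end
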